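(* Let $\mu$ be a probability measure on $\mathbb{R}$ satisfying the standing assumptions below and $\int_{\mathbb{R}}|x|\,d\mu<+\infty$, with support interval $I$. Let $\vec X_n$ be a random vector of $n$ i.i.d. variables with law $\mu$ and let $\vec v\in(0,1)^k$ be a percentile vector. Then \[ \lim_{n\to\infty}\frac{\mathbb{E}[SC_{\vec v}(\vec X_n)]}{\mathbb{E}[SC_{opt}(\vec X_n)]}=\frac{W_1(\mu,\nu_{Q_{\vec v}})}{W_1(\mu,\nu^{(k)})}, \] where $\nu^{(k)}$ is a solution to $\min_{\lambda\in\mathcal{P}_k(\mathbb{R})}W_1(\mu,\lambda)$ and $\nu_{Q_{\vec v}}=\sum_{i=1}^k(F_\mu(z_i)-F_\mu(z_{i-1}))\delta_{F_\mu^{[-1]}(v_i)}$ with $z_i=\frac{F_\mu^{[-1]}(v_i)+F_\mu^{[-1]}(v_{i+1})}{2}$ for $1\le i\le k-1$, $z_0=\inf I$, $z_k=\sup I$.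
   Context: For $\vec x\in\mathbb{R}^n$, $\vec y\in\mathbb{R}^k$: $SC(\vec x,\vec y)=\frac1n\sum_i\min_j|x_i-y_j|$, $SC_{opt}(\vec x)=\min_{\vec y}SC(\vec x,\vec y)$. A percentile vector is $\vec v$ with $0\le v_1\le\dots\le v_k\le1$; $\mathcal{PM}_{\vec v}$ sorts the reports $x_{(1)}\le\dots\le x_{(n)}$ and places facility $j$ at $x_{(\lfloor(n-1)v_j\rfloor+1)}$; $SC_{\vec v}(\vec x)$ is the Social Cost of its output. $\mathcal{P}_k(\mathbb{R})$: probability measures $\sum_{j=1}^k\nu_j\delta_{x_j}$ ($\nu_j\ge0$, $\sum\nu_j=1$). $W_1$ is the 1-Wasserstein distance $\min_{\pi\in\Pi(\alpha,\beta)}\int|x-y|d\pi$. $F_\mu$ is the c.d.f. of $\mu$, $F_\mu^{[-1]}(t)=\inf\{x:F_\mu(x)\ge t\}$. Standing assumptions on $\mu$: absolutely continuous with density $\rho_\mu$; support an interval on whose interior $\rho_\mu>0$; $\rho_\mu$ differentiable on the support. *)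

theory Defs
  imports "HOL-Probability.Probability"
begin

text \<open>Reports are x :: nat => real with indices 0..n-1; facility locations are
  y :: nat => real with indices 0..k-1 (values outside these ranges are irrelevant).\<close>

definition SC :: "nat \<Rightarrow> nat \<Rightarrow> (nat \<Rightarrow> real) \<Rightarrow> (nat \<Rightarrow> real) \<Rightarrow> real" where
  "SC n k x y = (1 / real n) * (\<Sum>i<n. Min ((\<lambda>j. \<bar>x i - y j\<bar>) ` {..<k}))"

definition SC_opt :: "nat \<Rightarrow> nat \<Rightarrow> (nat \<Rightarrow> real) \<Rightarrow> real" where
  "SC_opt n k x = (INF y. SC n k x y)"

definition percentile_vector :: "nat \<Rightarrow> (nat \<Rightarrow> real) \<Rightarrow> bool" where
  "percentile_vector k v \<longleftrightarrow> (\<forall>j<k. 0 \<le> v j \<and> v j \<le> 1) \<and> (\<forall>j. Suc j < k \<longrightarrow> v j \<le> v (Suc j))"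

text \<open>Percentile mechanism: facility j is placed at the (floor((n-1) v_j)+1)-th smallest
  report, i.e. at 0-based position floor((n-1) v_j) of the sorted reports.\<close>
definition PM :: "nat \<Rightarrow> nat \<Rightarrow> (nat \<Rightarrow> real) \<Rightarrow> (nat \<Rightarrow> real) \<Rightarrow> (nat \<Rightarrow> real)" where
  "PM n k v x = (\<lambda>j. sort (map x [0..<n]) ! nat \<lfloor>real (n - 1) * v j\<rfloor>)"

definition SC_PM :: "nat \<Rightarrow> nat \<Rightarrow> (nat \<Rightarrow> real) \<Rightarrow> (nat \<Rightarrow> real) \<Rightarrow> real" where
  "SC_PM n k v x = SC n k x (PM n k v x)"

definition cdf :: "real measure \<Rightarrow> real \<Rightarrow> real" where
  "cdf M x = measure M {..x}"

definition cdf_inv :: "real measure \<Rightarrow> real \<Rightarrow> real" where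
  "cdf_inv M t = Inf {x. cdf M x \<ge> t}"

definition cdf_ext :: "real measure \<Rightarrow> ereal \<Rightarrow> real" where
  "cdf_ext M z = (if z = -\<infinity> then 0 else if z = \<infinity> then 1 else cdf M (real_of_ereal z))"

definition discrete_measure :: "nat \<Rightarrow> (nat \<Rightarrow> real) \<Rightarrow> (nat \<Rightarrow> real) \<Rightarrow> real measure" where
  "discrete_measure k w p = measure_of UNIV (sets borel) (\<lambda>A. \<Sum>j<k. ennreal (w j) * indicator A (p j))"

definition Pk :: "nat \<Rightarrow> real measure set" where
  "Pk k = {discrete_measure k w p | w p. (\<forall>j<k. w j \<ge> 0) \<and> (\<Sum>j<k. w j) = 1}"

definition couplings :: "real measure \<Rightarrow> real measure \<Rightarrow> (real \<times> real) measure set" where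
  "couplings \<alpha> \<beta> = {\<pi>. sets \<pi> = sets (borel \<Otimes>\<^sub>M borel) \<and>
     (\<forall>A \<in> sets borel. emeasure \<pi> (A \<times> UNIV) = emeasure \<alpha> A \<and> emeasure \<pi> (UNIV \<times> A) = emeasure \<beta> A)}"

definition W1 :: "real measure \<Rightarrow> real measure \<Rightarrow> ennreal" where
  "W1 \<alpha> \<beta> = (INF \<pi> \<in> couplings \<alpha> \<beta>. \<integral>\<^sup>+ z. ennreal \<bar>fst z - snd z\<bar> \<partial>\<pi>)"

text \<open>The measure nu_{Q_v}: atoms q_j = F^{-1}(v_j) (j<k); boundaries z_0 = inf I,
  z_j = (q_{j-1}+q_j)/2 for 1<=j<=k-1, z_k = sup I; atom q_j has weight F(z_{j+1}) - F(z_j).\<close>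
definition nu_Q :: "real measure \<Rightarrow> real set \<Rightarrow> nat \<Rightarrow> (nat \<Rightarrow> real) \<Rightarrow> real measure" where
  "nu_Q M I k v =
     (let q = (\<lambda>j. cdf_inv M (v j));
          z = (\<lambda>j::nat. if j = 0 then Inf (ereal ` I) else if j = k then Sup (ereal ` I)
                        else ereal ((q (j - 1) + q j) / 2))
      in discrete_measure k (\<lambda>j. cdf_ext M (z (Suc j)) - cdf_ext M (z j)) q)"

definition standing_assumptions :: "real measure \<Rightarrow> (real \<Rightarrow> real) \<Rightarrow> real set \<Rightarrow> bool" where
  "standing_assumptions M \<rho> I \<longleftrightarrow>
     prob_space M \<and> \<rho> \<in> borel_measurable borel \<and> (\<forall>x. \<rho> x \<ge> 0) \<and>
     M = density lborel (\<lambda>x. ennreal (\<rho> x)) \<and>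
     is_interval I \<and> closed I \<and> interior I \<noteq> {} \<and>
     (\<forall>x. x \<notin> I \<longrightarrow> \<rho> x = 0) \<and> (\<forall>x\<in>interior I. \<rho> x > 0) \<and>
     \<rho> differentiable_on I"

end

theory Submission
  imports Defs
begin

definition cmin :: "nat \<Rightarrow> (nat \<Rightarrow> real) \<Rightarrow> real \<Rightarrow> real" where
  "cmin k p x = Min ((\<lambda>j. \<bar>x - p j\<bar>) ` {..<k})"

lemma cmin_le: "j < k \<Longrightarrow> cmin k p x \<le> \<bar>x - p j\<bar>"
  unfolding cmin_def by (rule Min_le) auto

lemma cmin_ex: "k \<ge> 1 \<Longrightarrow> \<exists>j<k. cmin k p x = \<bar>x - p j\<bar>"
proof -
  assume "k \<ge> 1"
  then have "Min ((\<lambda>j. \<bar>x - p j\<bar>) ` {..<k}) \<in> (\<lambda>j. \<bar>x - p j\<bar>) ` {..<k}"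
    by (intro Min_in) (auto simp: lessThan_empty_iff)
  then show ?thesis unfolding cmin_def by auto
qed

lemma cmin_ge: "k \<ge> 1 \<Longrightarrow> (\<And>j. j < k \<Longrightarrow> a \<le> \<bar>x - p j\<bar>) \<Longrightarrow> a \<le> cmin k p x"
  using cmin_ex by metis

lemma cmin_nonneg: "k \<ge> 1 \<Longrightarrow> 0 \<le> cmin k p x"
  by (rule cmin_ge) auto

lemma cmin_lip_x: "k \<ge> 1 \<Longrightarrow> \<bar>cmin k p x - cmin k p x'\<bar> \<le> \<bar>x - x'\<bar>"
proof -
  assume k: "k \<ge> 1"
  obtain j where j: "j < k" "cmin k p x = \<bar>x - p j\<bar>" using cmin_ex[OF k] by blast
  obtain j' where j': "j' < k" "cmin k p x' = \<bar>x' - p j'\<bar>" using cmin_ex[OF k] by blast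
  have "cmin k p x \<le> \<bar>x - p j'\<bar>" using cmin_le j' by auto
  moreover have "cmin k p x' \<le> \<bar>x' - p j\<bar>" using cmin_le j by auto
  moreover have "\<bar>x - p j'\<bar> \<le> \<bar>x - x'\<bar> + \<bar>x' - p j'\<bar>" "\<bar>x' - p j\<bar> \<le> \<bar>x - x'\<bar> + \<bar>x - p j\<bar>" by arith+
  ultimately show ?thesis using j j' unfolding abs_le_iff by linarith
qed

lemma cmin_lip_p: "k \<ge> 1 \<Longrightarrow> (\<And>j. j < k \<Longrightarrow> \<bar>p j - p' j\<bar> \<le> d) \<Longrightarrow> \<bar>cmin k p x - cmin k p' x\<bar> \<le> d"
proof -
  assume k: "k \<ge> 1" and d: "\<And>j. j < k \<Longrightarrow> \<bar>p j - p' j\<bar> \<le> d"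
  obtain j where j: "j < k" "cmin k p x = \<bar>x - p j\<bar>" using cmin_ex[OF k] by blast
  obtain j' where j': "j' < k" "cmin k p' x = \<bar>x - p' j'\<bar>" using cmin_ex[OF k] by blast
  have "cmin k p x \<le> \<bar>x - p j'\<bar>" using cmin_le j' by auto
  moreover have "cmin k p' x \<le> \<bar>x - p' j\<bar>" using cmin_le j by auto
  moreover have "\<bar>p j - p' j\<bar> \<le> d" "\<bar>p j' - p' j'\<bar> \<le> d" using d j j' by auto
  moreover have "\<bar>x - p j'\<bar> \<le> \<bar>x - p' j'\<bar> + \<bar>p j' - p' j'\<bar>" "\<bar>x - p' j\<bar> \<le> \<bar>x - p j\<bar> + \<bar>p j - p' j\<bar>" by arith+
  ultimately show ?thesis using j j' unfolding abs_le_iff by linarith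
qed

lemma cmin_le_abs: "k \<ge> 1 \<Longrightarrow> cmin k p x \<le> \<bar>x\<bar> + \<bar>p 0\<bar>"
  using cmin_le[of 0 k p x] by auto

lemma cmin_measurable[measurable]: "cmin k p \<in> borel_measurable borel"
  unfolding cmin_def by measurable

lemma SC_cmin: "SC n k x y = (1 / real n) * (\<Sum>i<n. cmin k y (x i))"
  unfolding SC_def cmin_def ..

lemma discrete_measure_eq:
  "discrete_measure k w p = distr (point_measure {..<k} (\<lambda>j. ennreal (w j))) borel p"
proof -
  let ?N = "distr (point_measure {..<k} (\<lambda>j. ennreal (w j))) borel p"
  have m: "p \<in> measurable (point_measure {..<k} (\<lambda>j. ennreal (w j))) borel"
    by (simp add: measurable_def space_point_measure sets_point_measure)
  have e: "emeasure ?N A = (\<Sum>j<k. ennreal (w j) * indicator A (p j))" if A: "A \<in> sets borel" for A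
  proof -
    have "emeasure ?N A = emeasure (point_measure {..<k} (\<lambda>j. ennreal (w j))) (p -` A \<inter> {..<k})"
      using A m by (simp add: emeasure_distr space_point_measure)
    also have "\<dots> = (\<Sum>j\<in>{..<k} \<inter> (p -` A \<inter> {..<k}). ennreal (w j))"
      by (subst emeasure_point_measure_finite) (auto intro!: sum.cong)
    also have "\<dots> = (\<Sum>j<k. ennreal (w j) * indicator A (p j))"
      by (rule sum.mono_neutral_cong_left) (auto simp: indicator_def)
    finally show ?thesis .
  qed
  have "discrete_measure k w p = measure_of UNIV (sets borel) (emeasure ?N)"
    unfolding discrete_measure_def
  proof (rule measure_of_eq)
    fix a :: "real set" assume "a \<in> sigma_sets UNIV (sets borel)"
    then have "a \<in> sets borel" by (metis sets.sigma_sets_eq space_borel)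
    then show "(\<Sum>j<k. ennreal (w j) * indicator a (p j)) = emeasure ?N a" using e by simp
  qed auto
  also have "\<dots> = ?N"
    using measure_of_of_measure[of ?N] by simp
  finally show ?thesis .
qed

lemma sets_discrete_measure[simp, measurable_cong]: "sets (discrete_measure k w p) = sets borel"
  by (simp add: discrete_measure_eq)

lemma space_discrete_measure[simp]: "space (discrete_measure k w p) = UNIV"
  by (simp add: discrete_measure_eq)

lemma emeasure_discrete_measure:
  "A \<in> sets borel \<Longrightarrow> emeasure (discrete_measure k w p) A = (\<Sum>j<k. ennreal (w j) * indicator A (p j))"
proof -
  assume A: "A \<in> sets borel"
  have m: "p \<in> measurable (point_measure {..<k} (\<lambda>j. ennreal (w j))) borel"
    by (simp add: measurable_def space_point_measure sets_point_measure)
  have "emeasure (discrete_measure k w p) A = emeasure (point_measure {..<k} (\<lambda>j. ennreal (w j))) (p -` A \<inter> {..<k})"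
    using A m by (simp add: discrete_measure_eq emeasure_distr space_point_measure)
  also have "\<dots> = (\<Sum>j\<in>{..<k} \<inter> (p -` A \<inter> {..<k}). ennreal (w j))"
    by (subst emeasure_point_measure_finite) (auto intro!: sum.cong)
  also have "\<dots> = (\<Sum>j<k. ennreal (w j) * indicator A (p j))"
    by (rule sum.mono_neutral_cong_left) (auto simp: indicator_def)
  finally show ?thesis .
qed

lemma discrete_measure_cong:
  "(\<And>j. j < k \<Longrightarrow> w j = w' j) \<Longrightarrow> discrete_measure k w p = discrete_measure k w' p"
  unfolding discrete_measure_def by (intro arg_cong[where f="measure_of _ _"] ext sum.cong) auto

lemma W1_lower:
  assumes sM: "sets M = sets borel" and k: "k \<ge> 1"
  shows "(\<integral>\<^sup>+x. ennreal (cmin k p x) \<partial>M) \<le> W1 M (discrete_measure k w p)"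
  unfolding W1_def
proof (rule INF_greatest)
  fix \<pi> assume "\<pi> \<in> couplings M (discrete_measure k w p)"
  then have s\<pi>: "sets \<pi> = sets (borel \<Otimes>\<^sub>M borel)"
    and m1: "\<And>A. A \<in> sets borel \<Longrightarrow> emeasure \<pi> (A \<times> UNIV) = emeasure M A"
    and m2: "\<And>A. A \<in> sets borel \<Longrightarrow> emeasure \<pi> (UNIV \<times> A) = emeasure (discrete_measure k w p) A"
    unfolding couplings_def by auto
  have sp: "space \<pi> = UNIV"
    using sets_eq_imp_space_eq[OF s\<pi>] by (simp add: space_pair_measure)
  let ?P = "p ` {..<k}"
  have Pb: "- ?P \<in> sets borel"
    by (intro borel_comp borel_closed finite_imp_closed) auto
  have "emeasure \<pi> (UNIV \<times> - ?P) = 0"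
    using m2[OF Pb] by (simp add: emeasure_discrete_measure[OF Pb])
  moreover have "UNIV \<times> - ?P \<in> sets \<pi>" using Pb s\<pi> by simp
  ultimately have "UNIV \<times> - ?P \<in> null_sets \<pi>" by auto
  then have ae: "AE z in \<pi>. snd z \<in> ?P"
    by (rule AE_I') (auto simp: sp)
  have fm: "fst \<in> measurable \<pi> borel"
    using measurable_fst by (simp add: measurable_cong_sets[OF s\<pi> refl])
  have d: "distr \<pi> borel fst = M"
  proof (rule measure_eqI)
    show "sets (distr \<pi> borel fst) = sets M" using sM by simp
    fix A assume "A \<in> sets (distr \<pi> borel fst)"
    then have A: "A \<in> sets borel" by simp
    have "fst -` A \<inter> space \<pi> = A \<times> UNIV" by (auto simp: sp)
    then show "emeasure (distr \<pi> borel fst) A = emeasure M A"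
      using A m1[OF A] fm by (simp add: emeasure_distr)
  qed
  have "(\<integral>\<^sup>+x. ennreal (cmin k p x) \<partial>M) = (\<integral>\<^sup>+z. ennreal (cmin k p (fst z)) \<partial>\<pi>)"
    by (subst d[symmetric], subst nn_integral_distr[OF fm]) auto
  also have "\<dots> \<le> (\<integral>\<^sup>+z. ennreal \<bar>fst z - snd z\<bar> \<partial>\<pi>)"
  proof (rule nn_integral_mono_AE)
    show "AE z in \<pi>. ennreal (cmin k p (fst z)) \<le> ennreal \<bar>fst z - snd z\<bar>"
      using ae by eventually_elim (auto intro!: ennreal_leI cmin_le)
  qed
  finally show "(\<integral>\<^sup>+x. ennreal (cmin k p x) \<partial>M) \<le> (\<integral>\<^sup>+z. ennreal \<bar>fst z - snd z\<bar> \<partial>\<pi>)" .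
qed

lemma W1_upper:
  assumes P: "prob_space M" and sM: "sets M = sets borel" and k: "k \<ge> 1"
    and idx: "\<And>x. idx x < k" "\<And>j. {x. idx x = j} \<in> sets borel"
    and cm: "\<And>x. cmin k p x = \<bar>x - p (idx x)\<bar>"
  shows "W1 M (discrete_measure k (\<lambda>j. measure M {x. idx x = j}) p) \<le> (\<integral>\<^sup>+x. ennreal (cmin k p x) \<partial>M)"
proof -
  interpret prob_space M by fact
  have spM: "space M = UNIV" using sets_eq_imp_space_eq[OF sM] by simp
  have im: "idx \<in> measurable M (count_space UNIV)"
    unfolding measurable_count_space_eq2_countable
    using idx(2) by (auto simp: spM sM vimage_def)
  have Tm: "(\<lambda>x. p (idx x)) \<in> borel_measurable M"
    using measurable_comp[OF im, of p borel] by (simp add: comp_def)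
  let ?T = "\<lambda>x. (x, p (idx x))"
  have Tm2: "?T \<in> measurable M (borel \<Otimes>\<^sub>M borel)"
    using Tm by (intro measurable_Pair) (auto simp: measurable_cong_sets[OF sM refl])
  let ?\<pi> = "distr M (borel \<Otimes>\<^sub>M borel) ?T"
  let ?\<nu> = "discrete_measure k (\<lambda>j. measure M {x. idx x = j}) p"
  have cpl: "?\<pi> \<in> couplings M ?\<nu>"
    unfolding couplings_def
  proof (intro CollectI conjI ballI)
    show "sets ?\<pi> = sets (borel \<Otimes>\<^sub>M borel)" by simp
    fix A :: "real set" assume A: "A \<in> sets borel"
    have "?T -` (A \<times> UNIV) \<inter> space M = A" by (auto simp: spM)
    then show "emeasure ?\<pi> (A \<times> UNIV) = emeasure M A"
      using A Tm2 by (simp add: emeasure_distr)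
    have e: "?T -` (UNIV \<times> A) \<inter> space M = (\<Union>j\<in>{j. j < k \<and> p j \<in> A}. {x. idx x = j})"
      using idx(1) by (auto simp: spM)
    have "emeasure ?\<pi> (UNIV \<times> A) = emeasure M (\<Union>j\<in>{j. j < k \<and> p j \<in> A}. {x. idx x = j})"
      using A Tm2 e by (simp add: emeasure_distr)
    also have "\<dots> = (\<Sum>j\<in>{j. j < k \<and> p j \<in> A}. emeasure M {x. idx x = j})"
      by (rule sum_emeasure[symmetric]) (auto simp: sM idx(2) disjoint_family_on_def)
    also have "\<dots> = (\<Sum>j<k. ennreal (measure M {x. idx x = j}) * indicator A (p j))"
      by (rule sum.mono_neutral_cong_left) (auto simp: indicator_def emeasure_eq_measure)
    also have "\<dots> = emeasure ?\<nu> A"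
      using A by (simp add: emeasure_discrete_measure)
    finally show "emeasure ?\<pi> (UNIV \<times> A) = emeasure ?\<nu> A" .
  qed
  have "W1 M ?\<nu> \<le> (\<integral>\<^sup>+z. ennreal \<bar>fst z - snd z\<bar> \<partial>?\<pi>)"
    unfolding W1_def using cpl by (rule INF_lower)
  also have "\<dots> = (\<integral>\<^sup>+x. ennreal \<bar>x - p (idx x)\<bar> \<partial>M)"
  proof -
    have fm: "(\<lambda>z::real\<times>real. ennreal \<bar>fst z - snd z\<bar>) \<in> borel_measurable (borel \<Otimes>\<^sub>M borel)"
      by measurable
    have fm': "(\<lambda>z::real\<times>real. ennreal \<bar>fst z - snd z\<bar>) \<in> borel_measurable ?\<pi>"
      using fm by (subst measurable_cong_sets[OF sets_distr refl])
    show ?thesis using nn_integral_distr[OF Tm2 fm'] by simp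
  qed
  also have "\<dots> = (\<integral>\<^sup>+x. ennreal (cmin k p x) \<partial>M)"
    by (simp add: cm)
  finally show ?thesis .
qed


lemma idx_Pk:
  assumes P: "prob_space M" and sM: "sets M = sets borel"
    and idx: "\<And>x. idx x < k" "\<And>j. {x. idx x = j} \<in> sets borel"
  shows "discrete_measure k (\<lambda>j. measure M {x. idx x = j}) p \<in> Pk k"
proof -
  interpret prob_space M by fact
  have spM: "space M = UNIV" using sets_eq_imp_space_eq[OF sM] by simp
  have "(\<Sum>j<k. measure M {x. idx x = j}) = measure M (\<Union>j<k. {x. idx x = j})"
    by (rule finite_measure_finite_Union[symmetric]) (auto simp: sM idx(2) disjoint_family_on_def)
  also have "(\<Union>j<k. {x. idx x = j}) = space M" using idx(1) by (auto simp: spM)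
  finally have "(\<Sum>j<k. measure M {x. idx x = j}) = 1" by (simp add: prob_space)
  then show ?thesis unfolding Pk_def by (intro CollectI exI[of _ "\<lambda>j. measure M {x. idx x = j}"] exI[of _ p]) auto
qed

lemma multi_subseq:
  fixes s :: "nat \<Rightarrow> nat \<Rightarrow> real"
  assumes B: "\<And>m j. \<bar>s m j\<bar> \<le> B"
  shows "\<exists>r \<theta>. strict_mono r \<and> (\<forall>j<k. (\<lambda>m. s (r m) j) \<longlonglongrightarrow> \<theta> j)"
proof (induction k)
  case 0
  show ?case by (intro exI[of _ id]) (auto simp: strict_mono_def)
next
  case (Suc k)
  then obtain r \<theta> where r: "strict_mono r" and lim: "\<forall>j<k. (\<lambda>m. s (r m) j) \<longlonglongrightarrow> \<theta> j" by blast
  have "bounded (range (\<lambda>m. s (r m) k))"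
    using B by (intro boundedI[of _ B]) auto
  then obtain l r' where r': "strict_mono r'" and l: "((\<lambda>m. s (r m) k) \<circ> r') \<longlonglongrightarrow> l"
    using bounded_imp_convergent_subsequence by blast
  show ?case
  proof (intro exI conjI allI impI)
    show "strict_mono (r \<circ> r')" using r r' by (rule strict_mono_o)
    fix j assume j: "j < Suc k"
    show "(\<lambda>m. s ((r \<circ> r') m) j) \<longlonglongrightarrow> (\<theta>(k := l)) j"
    proof (cases "j = k")
      case True then show ?thesis using l by (simp add: comp_def)
    next
      case False
      then have "j < k" using j by simp
      then have "(\<lambda>m. s (r m) j) \<longlonglongrightarrow> \<theta> j" using lim by simp
      from LIMSEQ_subseq_LIMSEQ[OF this r'] False show ?thesis by (simp add: comp_def)
    qed
  qed
qed

locale setting =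
  fixes M :: "real measure" and \<rho> :: "real \<Rightarrow> real" and I :: "real set" and k :: nat
  assumes SA: "standing_assumptions M \<rho> I" and intabs: "integrable M (\<lambda>x. \<bar>x\<bar>)"
    and k1: "k \<ge> 1"
begin

lemma prob: "prob_space M" using SA unfolding standing_assumptions_def by blast

sublocale prob_space M by (rule prob)

lemma sM[measurable_cong]: "sets M = sets borel"
  using SA unfolding standing_assumptions_def by auto

lemma spM[simp]: "space M = UNIV"
  using sets_eq_imp_space_eq[OF sM] by simp

lemma Mdens: "M = density lborel (\<lambda>x. ennreal (\<rho> x))" and rho_meas: "\<rho> \<in> borel_measurable borel"
  using SA unfolding standing_assumptions_def by auto

lemma real_distr: "real_distribution M"
  by (simp add: real_distribution_def real_distribution_axioms_def prob sM)

lemma atomless: "measure M {x} = 0"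
proof -
  have "AE y in lborel. y \<in> {x} \<longrightarrow> ennreal (\<rho> y) = 0"
    using AE_lborel_singleton[of x] by eventually_elim auto
  moreover have "(\<lambda>x. ennreal (\<rho> x)) \<in> borel_measurable borel" using rho_meas by measurable
  ultimately have "{x} \<in> null_sets M"
    unfolding Mdens
    by (subst null_sets_density_iff) auto
  then show ?thesis by (simp add: measure_def null_setsD1)
qed

definition cost :: "(nat \<Rightarrow> real) \<Rightarrow> real" where
  "cost p = (\<integral>x. cmin k p x \<partial>M)"

lemma integrable_cmin: "integrable M (cmin k p)"
proof (rule Bochner_Integration.integrable_bound)
  show "integrable M (\<lambda>x. \<bar>x\<bar> + \<bar>p 0\<bar>)" using intabs by simp
  show "cmin k p \<in> borel_measurable M" by measurable
  show "AE x in M. norm (cmin k p x) \<le> norm (\<bar>x\<bar> + \<bar>p 0\<bar>)"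
    using cmin_le_abs[OF k1] cmin_nonneg[OF k1] by auto
qed

lemma cost_nonneg: "0 \<le> cost p"
  unfolding cost_def using cmin_nonneg[OF k1] by simp

lemma nn_cost: "(\<integral>\<^sup>+x. ennreal (cmin k p x) \<partial>M) = ennreal (cost p)"
  unfolding cost_def
  by (rule nn_integral_eq_integral[OF integrable_cmin]) (simp add: cmin_nonneg[OF k1])

definition OPT :: real where "OPT = (INF p. cost p)"

lemma bdd_cost: "bdd_below (range cost)"
  using cost_nonneg by (intro bdd_belowI[of _ 0]) auto

lemma OPT_le: "OPT \<le> cost p"
  unfolding OPT_def by (rule cINF_lower[OF bdd_cost]) simp

lemma OPT_nonneg: "0 \<le> OPT"
  unfolding OPT_def by (rule cINF_greatest) (auto simp: cost_nonneg)

lemma far_centers: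
  assumes "\<And>j. j < k \<Longrightarrow> R < \<bar>p j\<bar>"
  shows "R - (\<integral>x. \<bar>x\<bar> \<partial>M) \<le> cost p"
proof -
  have "(\<integral>x. R - \<bar>x\<bar> \<partial>M) \<le> cost p"
    unfolding cost_def
  proof (rule integral_mono)
    show "integrable M (\<lambda>x. R - \<bar>x\<bar>)" using intabs by simp
    show "integrable M (cmin k p)" by (rule integrable_cmin)
    fix x
    show "R - \<bar>x\<bar> \<le> cmin k p x"
    proof (rule cmin_ge[OF k1])
      fix j assume "j < k"
      then have "R < \<bar>p j\<bar>" by (rule assms)
      then show "R - \<bar>x\<bar> \<le> \<bar>x - p j\<bar>" by arith
    qed
  qed
  then show ?thesis using intabs prob_space by simp
qed

end

definition psi :: "real \<Rightarrow> real" where "psi y = y / (1 + \<bar>y\<bar>)"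
definition phi :: "real \<Rightarrow> real" where "phi t = t / (1 - \<bar>t\<bar>)"

lemma psi_abs: "\<bar>psi y\<bar> = \<bar>y\<bar> / (1 + \<bar>y\<bar>)"
proof -
  have "\<bar>1 + \<bar>y\<bar>\<bar> = 1 + \<bar>y\<bar>" by simp
  then show ?thesis unfolding psi_def abs_divide by simp
qed

lemma frac_lt1: "0 \<le> (b::real) \<Longrightarrow> b / (1 + b) < 1"
  by (simp add: divide_less_eq)

lemma psi_bound: "\<bar>psi y\<bar> \<le> 1"
  unfolding psi_abs using frac_lt1[of "\<bar>y\<bar>"] by simp

lemma frac_mono: "0 \<le> (a::real) \<Longrightarrow> a \<le> b \<Longrightarrow> a / (1 + a) \<le> b / (1 + b)"
proof -
  assume a: "0 \<le> a" "a \<le> b"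
  have "1 / (1 + b) \<le> 1 / (1 + a)" using a by (intro divide_left_mono) auto
  moreover have "a / (1 + a) = 1 - 1 / (1 + a)" using a by (simp add: field_simps)
  moreover have "b / (1 + b) = 1 - 1 / (1 + b)" using a by (simp add: field_simps)
  ultimately show ?thesis by linarith
qed

lemma phi_psi: "phi (psi y) = y"
proof -
  have p: "0 < 1 + \<bar>y\<bar>" by simp
  have "1 - \<bar>psi y\<bar> = 1 / (1 + \<bar>y\<bar>)" unfolding psi_abs using p by (simp add: field_simps)
  then have "phi (psi y) = (y / (1 + \<bar>y\<bar>)) / (1 / (1 + \<bar>y\<bar>))" unfolding phi_def psi_def by simp
  also have "\<dots> = y" using p by simp
  finally show ?thesis .
qed

lemma isCont_phi: "\<bar>t\<bar> < 1 \<Longrightarrow> isCont phi t"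
  unfolding phi_def by (intro continuous_intros) auto

lemma psi_big: "\<bar>B\<bar> / (1 + \<bar>B\<bar>) < \<bar>psi y\<bar> \<Longrightarrow> \<bar>B\<bar> < \<bar>y\<bar>"
proof (rule ccontr)
  assume h: "\<bar>B\<bar> / (1 + \<bar>B\<bar>) < \<bar>psi y\<bar>" "\<not> \<bar>B\<bar> < \<bar>y\<bar>"
  then have "\<bar>y\<bar> / (1 + \<bar>y\<bar>) \<le> \<bar>B\<bar> / (1 + \<bar>B\<bar>)" by (intro frac_mono) auto
  then show False using h(1) unfolding psi_abs by linarith
qed

context setting begin

lemma exists_opt: "\<exists>p. cost p = OPT"
proof -
  define E where "E = (\<integral>x. \<bar>x\<bar> \<partial>M)"
  have E0: "0 \<le> E" unfolding E_def by simp
  define R where "R = OPT + 1 + E"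
  have R0: "0 \<le> R" unfolding R_def using OPT_nonneg E0 by simp
  have "\<forall>m::nat. \<exists>p. cost p < OPT + 1 / Suc m"
  proof
    fix m :: nat
    have h: "(INF p. cost p) = OPT" by (simp add: OPT_def)
    have "OPT < OPT + 1 / Suc m" by simp
    then show "\<exists>p. cost p < OPT + 1 / Suc m"
      using cINF_less_iff[OF _ bdd_cost, unfolded h, of "OPT + 1 / Suc m"] by auto
  qed
  then obtain P where P: "\<And>m. cost (P m) < OPT + 1 / Suc m" by metis
  have Pbd: "\<exists>j<k. \<bar>P m j\<bar> \<le> R" for m
  proof (rule ccontr)
    assume "\<not> (\<exists>j<k. \<bar>P m j\<bar> \<le> R)"
    then have "R - E \<le> cost (P m)" unfolding E_def by (intro far_centers) auto
    moreover have "1 / real (Suc m) \<le> 1" by (simp add: divide_simps)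
    ultimately show False using P[of m] unfolding R_def by linarith
  qed
  define s where "s m j = psi (P m j)" for m j
  obtain r \<theta> where r: "strict_mono r" and lim: "\<forall>j<k. (\<lambda>m. s (r m) j) \<longlonglongrightarrow> \<theta> j"
    using multi_subseq[of s 1] psi_bound unfolding s_def by blast
  define c where "c = R / (1 + R)"
  have c1: "c < 1" unfolding c_def using frac_lt1[OF R0] .
  have th1: "\<bar>\<theta> j\<bar> \<le> 1" if "j < k" for j
  proof -
    have "(\<lambda>m. \<bar>s (r m) j\<bar>) \<longlonglongrightarrow> \<bar>\<theta> j\<bar>" using lim that by (intro tendsto_intros) auto
    then show ?thesis by (rule LIMSEQ_le_const2) (auto simp: s_def psi_bound)
  qed
  have "\<exists>j0<k. \<bar>\<theta> j0\<bar> \<le> c"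
  proof (rule ccontr)
    assume "\<not> (\<exists>j0<k. \<bar>\<theta> j0\<bar> \<le> c)"
    then have "\<forall>j\<in>{..<k}. eventually (\<lambda>m. c < \<bar>s (r m) j\<bar>) sequentially"
      using lim by (auto intro!: order_tendstoD(1) tendsto_intros)
    then have "eventually (\<lambda>m. \<forall>j\<in>{..<k}. c < \<bar>s (r m) j\<bar>) sequentially"
      by (rule eventually_ball_finite[rotated]) simp
    then obtain m where m: "\<forall>j\<in>{..<k}. c < \<bar>s (r m) j\<bar>"
      by (auto simp: eventually_sequentially)
    obtain j where j: "j < k" "\<bar>P (r m) j\<bar> \<le> R" using Pbd by blast
    have "\<bar>s (r m) j\<bar> \<le> c" unfolding s_def psi_abs c_def using j by (intro frac_mono) auto
    then show False using m j by force
  qed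
  then obtain j0 where j0: "j0 < k" "\<bar>\<theta> j0\<bar> \<le> c" by blast
  define pstar where "pstar j = (if \<bar>\<theta> j\<bar> < 1 then phi (\<theta> j) else phi (\<theta> j0))" for j
  have conv: "(\<lambda>m. P (r m) j) \<longlonglongrightarrow> pstar j" if "j < k" "\<bar>\<theta> j\<bar> < 1" for j
  proof -
    have "(\<lambda>m. phi (s (r m) j)) \<longlonglongrightarrow> phi (\<theta> j)"
      using lim that isCont_phi by (intro isCont_tendsto_compose[of _ phi]) auto
    then show ?thesis using that by (simp add: s_def phi_psi pstar_def)
  qed
  have dive: "eventually (\<lambda>m. B < \<bar>P (r m) j\<bar>) sequentially" if "j < k" "\<not> \<bar>\<theta> j\<bar> < 1" for j B
  proof -
    have "\<bar>B\<bar> / (1 + \<bar>B\<bar>) < 1" by (rule frac_lt1) simp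
    then have "\<bar>B\<bar> / (1 + \<bar>B\<bar>) < \<bar>\<theta> j\<bar>" using that by linarith
    moreover have "(\<lambda>m. \<bar>s (r m) j\<bar>) \<longlonglongrightarrow> \<bar>\<theta> j\<bar>" using lim that by (intro tendsto_intros) auto
    ultimately have "eventually (\<lambda>m. \<bar>B\<bar> / (1 + \<bar>B\<bar>) < \<bar>s (r m) j\<bar>) sequentially"
      by (rule order_tendstoD(1)[rotated])
    then show ?thesis
      by eventually_elim (use psi_big in \<open>force simp: s_def\<close>)
  qed
  have pstar_j0: "pstar j = pstar j0" if "\<not> \<bar>\<theta> j\<bar> < 1" for j
    using that j0 c1 by (simp add: pstar_def)
  have pt: "eventually (\<lambda>m. cmin k pstar x - e < cmin k (P (r m)) x) sequentially" if e: "e > 0" for x e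
  proof -
    have "\<forall>j\<in>{..<k}. eventually (\<lambda>m. cmin k pstar x - e < \<bar>x - P (r m) j\<bar>) sequentially"
    proof
      fix j assume j: "j \<in> {..<k}"
      show "eventually (\<lambda>m. cmin k pstar x - e < \<bar>x - P (r m) j\<bar>) sequentially"
      proof (cases "\<bar>\<theta> j\<bar> < 1")
        case True
        have "eventually (\<lambda>m. dist (P (r m) j) (pstar j) < e) sequentially"
          using conv[of j] True j e by (auto simp: tendsto_iff)
        then show ?thesis
        proof eventually_elim
          case (elim m)
          have "cmin k pstar x \<le> \<bar>x - pstar j\<bar>" using j by (simp add: cmin_le)
          then show ?case using elim unfolding dist_real_def by arith
        qed
      next
        case False
        have "eventually (\<lambda>m. \<bar>x\<bar> + cmin k pstar x < \<bar>P (r m) j\<bar>) sequentially"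
          using dive[of j] False j by auto
        then show ?thesis
        proof eventually_elim
          case (elim m)
          then show ?case using e by arith
        qed
      qed
    qed
    then have "eventually (\<lambda>m. \<forall>j\<in>{..<k}. cmin k pstar x - e < \<bar>x - P (r m) j\<bar>) sequentially"
      by (rule eventually_ball_finite[rotated]) simp
    then show ?thesis
    proof eventually_elim
      case (elim m)
      obtain j where "j < k" "cmin k (P (r m)) x = \<bar>x - P (r m) j\<bar>" using cmin_ex[OF k1] by blast
      then show ?case using elim by auto
    qed
  qed
  have liminf_pt: "ennreal (cmin k pstar x) \<le> liminf (\<lambda>m. ennreal (cmin k (P (r m)) x))" for x
    unfolding le_Liminf_iff
  proof (intro allI impI)
    fix y :: ennreal assume y: "y < ennreal (cmin k pstar x)"
    then have yt: "y < top" using order.strict_trans ennreal_less_top by blast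
    define y' where "y' = enn2real y"
    have y'0: "0 \<le> y'" unfolding y'_def by simp
    have yy: "y = ennreal y'" unfolding y'_def using yt by simp
    have "y' < cmin k pstar x" using y y'0 unfolding yy by (simp add: ennreal_less_iff)
    then have "eventually (\<lambda>m. cmin k pstar x - (cmin k pstar x - y') < cmin k (P (r m)) x) sequentially"
      by (intro pt) simp
    then show "eventually (\<lambda>m. y < ennreal (cmin k (P (r m)) x)) sequentially"
      by eventually_elim (use y'0 in \<open>simp add: yy ennreal_less_iff\<close>)
  qed
  have costlim: "(\<lambda>m. cost (P (r m))) \<longlonglongrightarrow> OPT"
  proof (rule tendsto_sandwich[of "\<lambda>m. OPT" _ _ "\<lambda>m. OPT + 1 / Suc m"])
    show "eventually (\<lambda>m. OPT \<le> cost (P (r m))) sequentially" by (simp add: OPT_le)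
    show "eventually (\<lambda>m. cost (P (r m)) \<le> OPT + 1 / Suc m) sequentially"
    proof (intro always_eventually allI)
      fix m
      have "m \<le> r m" using seq_suble[OF r] .
      then have "1 / real (Suc (r m)) \<le> 1 / Suc m" by (simp add: divide_simps)
      then show "cost (P (r m)) \<le> OPT + 1 / Suc m" using P[of "r m"] by linarith
    qed
    show "(\<lambda>m. OPT) \<longlonglongrightarrow> OPT" by simp
    have "(\<lambda>m. 1 / real (Suc m)) \<longlonglongrightarrow> 0" using LIMSEQ_inverse_real_of_nat by (simp add: inverse_eq_divide)
    then show "(\<lambda>m. OPT + 1 / real (Suc m)) \<longlonglongrightarrow> OPT" using tendsto_add[of "\<lambda>m. OPT" OPT] by force
  qed
  have "ennreal (cost pstar) = (\<integral>\<^sup>+x. ennreal (cmin k pstar x) \<partial>M)" by (simp add: nn_cost)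
  also have "\<dots> \<le> (\<integral>\<^sup>+x. liminf (\<lambda>m. ennreal (cmin k (P (r m)) x)) \<partial>M)"
    by (intro nn_integral_mono liminf_pt)
  also have "\<dots> \<le> liminf (\<lambda>m. (\<integral>\<^sup>+x. ennreal (cmin k (P (r m)) x) \<partial>M))"
    by (intro nn_integral_liminf) measurable
  also have "\<dots> = liminf (\<lambda>m. ennreal (cost (P (r m))))" by (simp add: nn_cost)
  also have "\<dots> = ennreal OPT"
    by (intro lim_imp_Liminf) (auto intro: costlim)
  finally have "cost pstar \<le> OPT" using OPT_nonneg by simp
  then show ?thesis using OPT_le[of pstar] by (intro exI[of _ pstar]) simp
qed

end

context setting begin

definition nidx :: "(nat \<Rightarrow> real) \<Rightarrow> real \<Rightarrow> nat" where
  "nidx p x = (LEAST j. j < k \<and> cmin k p x = \<bar>x - p j\<bar>)"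

lemma nidx: "nidx p x < k \<and> cmin k p x = \<bar>x - p (nidx p x)\<bar>"
proof -
  obtain j where "j < k" "cmin k p x = \<bar>x - p j\<bar>" using cmin_ex[OF k1] by blast
  then have "j < k \<and> cmin k p x = \<bar>x - p j\<bar>" by simp
  then show ?thesis unfolding nidx_def by (rule LeastI)
qed

lemma nidx_meas: "{x. nidx p x = j} \<in> sets borel"
proof -
  have eq: "nidx p x = j \<longleftrightarrow> (j < k \<and> cmin k p x = \<bar>x - p j\<bar> \<and> (\<forall>i\<in>{..<j}. cmin k p x \<noteq> \<bar>x - p i\<bar>))" for x
  proof
    assume a: "nidx p x = j"
    then have jk: "j < k" "cmin k p x = \<bar>x - p j\<bar>" using nidx[of p x] by auto
    moreover have "cmin k p x \<noteq> \<bar>x - p i\<bar>" if "i \<in> {..<j}" for i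
    proof
      assume ci: "cmin k p x = \<bar>x - p i\<bar>"
      have "(LEAST j. j < k \<and> cmin k p x = \<bar>x - p j\<bar>) \<le> i" using that jk ci by (intro Least_le) auto
      then have "j \<le> i" using a unfolding nidx_def by simp
      then show False using that by simp
    qed
    ultimately show "j < k \<and> cmin k p x = \<bar>x - p j\<bar> \<and> (\<forall>i\<in>{..<j}. cmin k p x \<noteq> \<bar>x - p i\<bar>)" by blast
  next
    assume h: "j < k \<and> cmin k p x = \<bar>x - p j\<bar> \<and> (\<forall>i\<in>{..<j}. cmin k p x \<noteq> \<bar>x - p i\<bar>)"
    show "nidx p x = j" unfolding nidx_def
    proof (rule Least_equality)
      show "j < k \<and> cmin k p x = \<bar>x - p j\<bar>" using h by simp
      fix y assume "y < k \<and> cmin k p x = \<bar>x - p y\<bar>"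
      then show "j \<le> y" using h by (meson lessThan_iff not_le_imp_less)
    qed
  qed
  have "{x. nidx p x = j} = {x \<in> space borel. j < k \<and> cmin k p x = \<bar>x - p j\<bar> \<and> (\<forall>i\<in>{..<j}. cmin k p x \<noteq> \<bar>x - p i\<bar>)}"
    using eq by auto
  also have "\<dots> \<in> sets borel" by measurable
  finally show ?thesis .
qed

lemma W1_ge_cost: "ennreal (cost p) \<le> W1 M (discrete_measure k w p)"
  using W1_lower[OF sM k1, of p w] nn_cost[of p] by simp

lemma W1_ge_OPT: "\<nu> \<in> Pk k \<Longrightarrow> ennreal OPT \<le> W1 M \<nu>"
proof -
  assume "\<nu> \<in> Pk k"
  then obtain w p where "\<nu> = discrete_measure k w p" unfolding Pk_def by blast
  then show ?thesis using W1_ge_cost[of p w] OPT_le[of p] by (metis ennreal_leI order_trans)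
qed

definition nu_of :: "(nat \<Rightarrow> real) \<Rightarrow> real measure" where
  "nu_of p = discrete_measure k (\<lambda>j. measure M {x. nidx p x = j}) p"

lemma nu_of_Pk: "nu_of p \<in> Pk k"
  unfolding nu_of_def using nidx nidx_meas by (intro idx_Pk[OF prob sM]) auto

lemma W1_nu_of: "W1 M (nu_of p) = ennreal (cost p)"
proof (rule antisym)
  show "W1 M (nu_of p) \<le> ennreal (cost p)"
    unfolding nu_of_def nn_cost[symmetric]
    using nidx nidx_meas by (intro W1_upper[OF prob sM k1]) auto
  show "ennreal (cost p) \<le> W1 M (nu_of p)" unfolding nu_of_def by (rule W1_ge_cost)
qed

lemma exists_W1_min: "\<exists>\<nu>\<in>Pk k. \<forall>lam\<in>Pk k. W1 M \<nu> \<le> W1 M lam"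
proof -
  obtain p where p: "cost p = OPT" using exists_opt by blast
  show ?thesis
    using nu_of_Pk[of p] W1_nu_of[of p] p W1_ge_OPT by (intro bexI[of _ "nu_of p"]) auto
qed

lemma W1_min_val:
  assumes "\<nu>k \<in> Pk k" "\<forall>lam\<in>Pk k. W1 M \<nu>k \<le> W1 M lam"
  shows "W1 M \<nu>k = ennreal OPT"
proof -
  obtain p where p: "cost p = OPT" using exists_opt by blast
  have "W1 M \<nu>k \<le> ennreal OPT" using assms(2) nu_of_Pk[of p] W1_nu_of[of p] p by auto
  then show ?thesis using W1_ge_OPT[OF assms(1)] by simp
qed

end

context setting begin

abbreviation PP :: "nat \<Rightarrow> (nat \<Rightarrow> real) measure" where
  "PP n \<equiv> PiM {..<n} (\<lambda>_. M)"

lemma prob_PP: "prob_space (PP n)"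
  by (rule prob_space_PiM) (rule prob)

lemma PS: "product_sigma_finite (\<lambda>_::nat. M)"
  unfolding product_sigma_finite_def using prob prob_space_imp_sigma_finite by blast

lemma comp_meas[measurable]: "i < n \<Longrightarrow> (\<lambda>x. x i) \<in> measurable (PP n) M"
  by (rule measurable_component_singleton) simp

lemma comp_meas_borel: "i < n \<Longrightarrow> (\<lambda>x. x i) \<in> borel_measurable (PP n)"
  using comp_meas[of i n] by (simp add: measurable_cong_sets[OF refl sM])

lemma distr_comp: "i < n \<Longrightarrow> distr (PP n) M (\<lambda>x. x i) = M"
  by (rule distr_PiM_component) (auto intro: prob)

lemma probU: "measure M UNIV = 1"
  using prob_space.prob_space[OF prob] by simp

lemma integrable_comp:
  fixes h :: "real \<Rightarrow> real"
  assumes "integrable M h" "i < n"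
  shows "integrable (PP n) (\<lambda>x. h (x i))"
proof -
  have hm: "h \<in> borel_measurable M" using assms(1) by auto
  have "integrable (distr (PP n) M (\<lambda>x. x i)) h" using assms distr_comp by simp
  then show ?thesis using integrable_distr_eq[OF comp_meas[OF assms(2)] hm] by simp
qed

lemma integral_comp:
  fixes h :: "real \<Rightarrow> real"
  assumes "h \<in> borel_measurable M" "i < n"
  shows "(\<integral>x. h (x i) \<partial>PP n) = (\<integral>x. h x \<partial>M)"
proof -
  have "(\<integral>x. h x \<partial>M) = (\<integral>x. h x \<partial>distr (PP n) M (\<lambda>x. x i))" using distr_comp[OF assms(2)] by simp
  also have "\<dots> = (\<integral>x. h (x i) \<partial>PP n)" by (rule integral_distr[OF comp_meas[OF assms(2)] assms(1)])
  finally show ?thesis by simp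
qed

lemma integrable_mean:
  fixes h :: "real \<Rightarrow> real"
  assumes "integrable M h"
  shows "integrable (PP n) (\<lambda>x. (1 / real n) * (\<Sum>i<n. h (x i)))"
  using assms integrable_comp by (intro integrable_mult_right integrable_sum) auto

lemma integral_mean:
  fixes h :: "real \<Rightarrow> real"
  assumes "integrable M h" "n > 0"
  shows "(\<integral>x. (1 / real n) * (\<Sum>i<n. h (x i)) \<partial>PP n) = (\<integral>x. h x \<partial>M)"
proof -
  have "(\<integral>x. (1 / real n) * (\<Sum>i<n. h (x i)) \<partial>PP n) = (1 / real n) * (\<Sum>i<n. (\<integral>x. h (x i) \<partial>PP n))"
  proof -
    have "(\<integral>x. (\<Sum>i<n. h (x i)) \<partial>PP n) = (\<Sum>i<n. (\<integral>x. h (x i) \<partial>PP n))"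
      by (rule Bochner_Integration.integral_sum[where I="{..<n}" and M="PP n" and f="\<lambda>i x. h (x i)"]) (use assms integrable_comp in auto)
    then show ?thesis by simp
  qed
  also have "\<dots> = (1 / real n) * (\<Sum>i<n. (\<integral>x. h x \<partial>M))"
    using assms by (intro arg_cong[where f="\<lambda>t. (1 / real n) * t"] sum.cong refl integral_comp) auto
  also have "\<dots> = (\<integral>x. h x \<partial>M)" using assms by simp
  finally show ?thesis .
qed

lemma integral_pair:
  fixes g :: "real \<Rightarrow> real"
  assumes gm: "g \<in> borel_measurable borel" and gb: "\<And>x. \<bar>g x\<bar> \<le> 1"
    and i: "i < n" and j: "j < n" and ij: "i \<noteq> j"
  shows "(\<integral>x. g (x i) * g (x j) \<partial>PP n) = (\<integral>x. g x \<partial>M) * (\<integral>x. g x \<partial>M)"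
proof -
  interpret product_sigma_finite "\<lambda>_::nat. M" by (rule PS)
  define f where "f l = (if l = i \<or> l = j then g else (\<lambda>_. 1))" for l
  have gi: "integrable M g"
    using gb gm by (intro integrable_const_bound[where B=1]) (auto simp: measurable_cong_sets[OF sM refl])
  have fi: "\<And>l. l \<in> {..<n} \<Longrightarrow> integrable M (f l)" unfolding f_def using gi by auto
  have "(\<integral>x. (\<Prod>l\<in>{..<n}. f l (x l)) \<partial>PP n) = (\<Prod>l\<in>{..<n}. integral\<^sup>L M (f l))"
    by (rule product_integral_prod) (auto intro: fi)
  moreover have "(\<Prod>l\<in>{..<n}. f l (x l)) = g (x i) * g (x j)" for x
  proof -
    have "(\<Prod>l\<in>{..<n}. f l (x l)) = (\<Prod>l\<in>{i, j}. f l (x l))"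
      using i j by (intro prod.mono_neutral_cong_right) (auto simp: f_def)
    also have "\<dots> = g (x i) * g (x j)" using ij by (simp add: f_def)
    finally show ?thesis .
  qed
  moreover have "(\<Prod>l\<in>{..<n}. integral\<^sup>L M (f l)) = (\<integral>x. g x \<partial>M) * (\<integral>x. g x \<partial>M)"
  proof -
    have "(\<Prod>l\<in>{..<n}. integral\<^sup>L M (f l)) = (\<Prod>l\<in>{i, j}. integral\<^sup>L M (f l))"
      using i j by (intro prod.mono_neutral_cong_right) (auto simp: f_def probU)
    also have "\<dots> = (\<integral>x. g x \<partial>M) * (\<integral>x. g x \<partial>M)" using ij by (simp add: f_def)
    finally show ?thesis .
  qed
  ultimately show ?thesis by simp
qed

lemma variance_bound:
  fixes g :: "real \<Rightarrow> real"
  assumes gm: "g \<in> borel_measurable borel" and gb: "\<And>x. \<bar>g x\<bar> \<le> 1"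
    and g0: "(\<integral>x. g x \<partial>M) = 0" and n: "n > 0"
  shows "(\<integral>x. ((1 / real n) * (\<Sum>i<n. g (x i)))\<^sup>2 \<partial>PP n) \<le> 1 / real n"
proof -
  interpret P: prob_space "PP n" by (rule prob_PP)
  have gim: "(\<lambda>x. g (x i)) \<in> borel_measurable (PP n)" if "i < n" for i
    using measurable_comp[OF comp_meas_borel[OF that] gm] by (simp add: comp_def)
  have int2: "integrable (PP n) (\<lambda>x. g (x i) * g (x j))" if "i < n" "j < n" for i j
  proof (rule P.integrable_const_bound[where B=1])
    show "AE x in PP n. norm (g (x i) * g (x j)) \<le> 1"
      using gb by (auto simp: abs_mult intro!: mult_le_one)
    show "(\<lambda>x. g (x i) * g (x j)) \<in> borel_measurable (PP n)" using gim that by measurable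
  qed
  have sq: "((1 / real n) * (\<Sum>i<n. g (x i)))\<^sup>2 = (1 / real n)\<^sup>2 * (\<Sum>i<n. \<Sum>j<n. g (x i) * g (x j))" for x
  proof -
    have "(\<Sum>i<n. g (x i))\<^sup>2 = (\<Sum>i<n. \<Sum>j<n. g (x i) * g (x j))"
      unfolding power2_eq_square sum_product ..
    then show ?thesis by (simp only: power_mult_distrib)
  qed
  have "(\<integral>x. ((1 / real n) * (\<Sum>i<n. g (x i)))\<^sup>2 \<partial>PP n)
      = (1 / real n)\<^sup>2 * (\<Sum>i<n. \<Sum>j<n. (\<integral>x. g (x i) * g (x j) \<partial>PP n))"
  proof -
    have "(\<integral>x. (\<Sum>i<n. \<Sum>j<n. g (x i) * g (x j)) \<partial>PP n) = (\<Sum>i<n. (\<integral>x. (\<Sum>j<n. g (x i) * g (x j)) \<partial>PP n))"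
      by (rule Bochner_Integration.integral_sum[where I="{..<n}" and M="PP n" and f="\<lambda>i x. \<Sum>j<n. g (x i) * g (x j)"]) (auto intro!: integrable_sum int2)
    also have "\<dots> = (\<Sum>i<n. \<Sum>j<n. (\<integral>x. g (x i) * g (x j) \<partial>PP n))"
      by (intro sum.cong refl Bochner_Integration.integral_sum[where I="{..<n}" and M="PP n" and f="\<lambda>j x. g (x _) * g (x j)"]) (auto intro!: int2)
    finally show ?thesis unfolding sq by simp
  qed
  also have "(\<Sum>i<n. \<Sum>j<n. (\<integral>x. g (x i) * g (x j) \<partial>PP n)) = (\<Sum>i<n. (\<integral>x. g (x i) * g (x i) \<partial>PP n))"
  proof (rule sum.cong[OF refl])
    fix i assume i: "i \<in> {..<n}"
    have "(\<Sum>j<n. (\<integral>x. g (x i) * g (x j) \<partial>PP n)) = (\<Sum>j\<in>{i}. (\<integral>x. g (x i) * g (x j) \<partial>PP n))"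
      using i by (intro sum.mono_neutral_cong_right) (auto simp: integral_pair[OF gm gb] g0)
    then show "(\<Sum>j<n. (\<integral>x. g (x i) * g (x j) \<partial>PP n)) = (\<integral>x. g (x i) * g (x i) \<partial>PP n)" by simp
  qed
  also have "\<dots> \<le> (\<Sum>i<n. 1)"
  proof (rule sum_mono)
    fix i assume i: "i \<in> {..<n}"
    have "(\<integral>x. g (x i) * g (x i) \<partial>PP n) \<le> (\<integral>x. 1 \<partial>PP n)"
    proof (rule integral_mono)
      show "integrable (PP n) (\<lambda>x. g (x i) * g (x i))" using int2[of i i] i by simp
      show "integrable (PP n) (\<lambda>x. 1)" by simp
      fix x
      have "\<bar>g (x i)\<bar> * \<bar>g (x i)\<bar> \<le> 1 * 1" using gb[of "x i"] by (intro mult_mono) auto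
      then show "g (x i) * g (x i) \<le> 1" by (simp add: abs_mult[symmetric])
    qed
    then show "(\<integral>x. g (x i) * g (x i) \<partial>PP n) \<le> 1" by (simp add: P.prob_space)
  qed
  finally have "(\<integral>x. ((1 / real n) * (\<Sum>i<n. g (x i)))\<^sup>2 \<partial>PP n) \<le> (1 / real n)\<^sup>2 * real n"
    by (simp add: mult_left_mono)
  also have "\<dots> = 1 / real n" using n by (simp add: power2_eq_square)
  finally show ?thesis .
qed

end

context setting begin

lemma SC_meas[measurable]: "(\<lambda>x. SC n k x y) \<in> borel_measurable (PP n)"
  unfolding SC_cmin
proof -
  have "(\<lambda>x. cmin k y (x i)) \<in> borel_measurable (PP n)" if "i < n" for i
    using measurable_comp[OF comp_meas_borel[OF that] cmin_measurable] by (simp add: comp_def)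
  then show "(\<lambda>x. 1 / real n * (\<Sum>i<n. cmin k y (x i))) \<in> borel_measurable (PP n)"
    by (intro borel_measurable_times borel_measurable_const borel_measurable_sum) auto
qed

lemma SC_nonneg: "0 \<le> SC n k x y"
  unfolding SC_cmin using cmin_nonneg[OF k1] by (simp add: sum_nonneg)

lemma SC_lip_p:
  fixes x :: "nat \<Rightarrow> real"
  assumes "\<And>j. j < k \<Longrightarrow> \<bar>y j - y' j\<bar> \<le> e"
  shows "SC n k x y \<le> SC n k x y' + e"
proof (cases "n = 0")
  case True
  have "0 \<le> e" using assms[of 0] k1 by auto
  then show ?thesis using True by (simp add: SC_cmin)
next
  case False
  have "(\<Sum>i<n. cmin k y (x i)) \<le> (\<Sum>i<n. cmin k y' (x i) + e)"
  proof (intro sum_mono)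
    fix i
    show "cmin k y (x i) \<le> cmin k y' (x i) + e"
      using cmin_lip_p[OF k1, of y y' e "x i"] assms by (simp add: abs_le_iff)
  qed
  then have "(1 / real n) * (\<Sum>i<n. cmin k y (x i)) \<le> (1 / real n) * (\<Sum>i<n. cmin k y' (x i) + e)"
    by (intro mult_left_mono) auto
  also have "\<dots> = (1 / real n) * (\<Sum>i<n. cmin k y' (x i)) + e"
    using False by (simp add: sum.distrib field_simps)
  finally show ?thesis by (simp add: SC_cmin)
qed

definition Dset :: "(nat \<Rightarrow> real) set" where
  "Dset = range (\<lambda>l::rat list. \<lambda>j. if j < length l then of_rat (l ! j) else 0)"

lemma countable_Dset: "countable Dset"
  unfolding Dset_def by simp

lemma bdd_SC: "bdd_below ((\<lambda>y. SC n k x y) ` A)"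
  using SC_nonneg by (intro bdd_belowI[of _ 0]) auto

lemma Dset_approx:
  assumes e: "e > 0"
  shows "\<exists>y'\<in>Dset. \<forall>j<k. \<bar>y j - y' j\<bar> \<le> e"
proof -
  have "\<forall>j. \<exists>q::rat. y j - e < of_rat q \<and> of_rat q < y j + e"
    using e by (intro allI of_rat_dense) simp
  then obtain q where q: "\<And>j. y j - e < of_rat (q j) \<and> of_rat (q j) < y j + e" by metis
  define l where "l = map q [0..<k]"
  define y' where "y' = (\<lambda>j. if j < length l then of_rat (l ! j) else (0::real))"
  have "y' \<in> Dset" unfolding Dset_def y'_def by blast
  moreover have "\<forall>j<k. \<bar>y j - y' j\<bar> \<le> e"
  proof (intro allI impI)
    fix j assume "j < k"
    then have yj: "y' j = of_rat (q j)" by (simp add: y'_def l_def)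
    show "\<bar>y j - y' j\<bar> \<le> e" using q[of j] unfolding yj abs_le_iff by linarith
  qed
  ultimately show ?thesis by blast
qed

lemma SC_opt_Dset: "SC_opt n k x = (INF y\<in>Dset. SC n k x y)"
proof (rule antisym)
  have ne: "Dset \<noteq> {}" unfolding Dset_def by blast
  show "SC_opt n k x \<le> (INF y\<in>Dset. SC n k x y)"
    unfolding SC_opt_def by (rule cINF_superset_mono[OF ne bdd_SC]) auto
  show "(INF y\<in>Dset. SC n k x y) \<le> SC_opt n k x"
    unfolding SC_opt_def
  proof (rule cINF_greatest)
    fix y
    show "(INF y\<in>Dset. SC n k x y) \<le> SC n k x y"
    proof (rule field_le_epsilon)
      fix e :: real assume e: "0 < e"
      obtain y' where y': "y' \<in> Dset" "\<forall>j<k. \<bar>y j - y' j\<bar> \<le> e" using Dset_approx[OF e] by blast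
      have "(INF y\<in>Dset. SC n k x y) \<le> SC n k x y'" by (rule cINF_lower[OF bdd_SC y'(1)])
      also have "\<dots> \<le> SC n k x y + e" using y'(2) by (intro SC_lip_p) (simp add: abs_minus_commute)
      finally show "(INF y\<in>Dset. SC n k x y) \<le> SC n k x y + e" .
    qed
  qed simp
qed

lemma SC_opt_meas: "(\<lambda>x. SC_opt n k x) \<in> borel_measurable (PP n)"
  unfolding SC_opt_Dset
  by (rule borel_measurable_cINF_real[OF countable_Dset]) simp

lemma SC_opt_le: "SC_opt n k x \<le> SC n k x y"
  unfolding SC_opt_def by (rule cINF_lower[OF bdd_SC]) simp

lemma SC_opt_nonneg: "0 \<le> SC_opt n k x"
  unfolding SC_opt_def by (rule cINF_greatest) (auto simp: SC_nonneg)

lemma integrable_SC: "integrable (PP n) (\<lambda>x. SC n k x y)"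
  unfolding SC_cmin by (rule integrable_mean[OF integrable_cmin])

lemma integrable_SC_opt: "integrable (PP n) (\<lambda>x. SC_opt n k x)"
proof (rule Bochner_Integration.integrable_bound[OF integrable_SC[of n "\<lambda>_. 0"]])
  show "(\<lambda>x. SC_opt n k x) \<in> borel_measurable (PP n)" by (rule SC_opt_meas)
  show "AE x in PP n. norm (SC_opt n k x) \<le> norm (SC n k x (\<lambda>_. 0))"
    using SC_opt_le SC_opt_nonneg SC_nonneg by auto
qed

lemma E_SC: "n > 0 \<Longrightarrow> (\<integral>x. SC n k x y \<partial>PP n) = cost y"
  unfolding SC_cmin cost_def by (rule integral_mean[OF integrable_cmin])

lemma E_SC_opt_upper: "(\<integral>x. SC_opt n k x \<partial>PP n) \<le> OPT"
proof (cases "n = 0")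
  case True
  then show ?thesis using OPT_nonneg by (simp add: SC_opt_def SC_def)
next
  case False
  obtain p where p: "cost p = OPT" using exists_opt by blast
  have "(\<integral>x. SC_opt n k x \<partial>PP n) \<le> (\<integral>x. SC n k x p \<partial>PP n)"
    by (intro integral_mono integrable_SC_opt integrable_SC SC_opt_le)
  also have "\<dots> = OPT" using False p E_SC by simp
  finally show ?thesis .
qed

lemma E_SC_opt_nonneg: "0 \<le> (\<integral>x. SC_opt n k x \<partial>PP n)"
  using SC_opt_nonneg by simp

end

definition clip :: "real \<Rightarrow> real \<Rightarrow> real" where "clip L t = max (- L) (min L t)"

lemma clip_meas[measurable]: "clip L \<in> borel_measurable borel"
  unfolding clip_def by measurable

lemma clip_bound: "0 \<le> L \<Longrightarrow> - L \<le> clip L t \<and> clip L t \<le> L"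
  unfolding clip_def by auto

lemma clip_id: "\<bar>t\<bar> \<le> L \<Longrightarrow> clip L t = t"
  unfolding clip_def by auto

lemma clip_dist_le: "0 \<le> L \<Longrightarrow> \<bar>t - clip L t\<bar> \<le> \<bar>t\<bar>"
  unfolding clip_def by auto

lemma clip_closer: "\<bar>t\<bar> \<le> L \<Longrightarrow> \<bar>t - clip L a\<bar> \<le> \<bar>t - a\<bar>"
  unfolding clip_def by auto

lemma abs_le_sq: "0 < \<eta> \<Longrightarrow> \<bar>z::real\<bar> \<le> \<eta> + z\<^sup>2 / \<eta>"
proof -
  assume h: "0 < \<eta>"
  have "\<eta> * \<bar>z\<bar> \<le> \<eta> * \<eta> + z\<^sup>2"
  proof (cases "\<bar>z\<bar> \<le> \<eta>")
    case True
    then have "\<eta> * \<bar>z\<bar> \<le> \<eta> * \<eta>" using h by (intro mult_left_mono) auto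
    then show ?thesis by (simp add: add_increasing2)
  next
    case False
    then have "\<eta> * \<bar>z\<bar> \<le> \<bar>z\<bar> * \<bar>z\<bar>" using h by (intro mult_right_mono) auto
    also have "\<dots> = z\<^sup>2" by (simp add: power2_eq_square abs_mult[symmetric])
    finally show ?thesis using h by (smt (verit) mult_pos_pos)
  qed
  then show ?thesis using h by (simp add: field_simps)
qed

context setting begin

lemma tail_small:
  assumes e: "e > 0"
  shows "\<exists>L>0. (\<integral>t. \<bar>t - clip L t\<bar> \<partial>M) < e"
proof -
  define s where "s N t = \<bar>t - clip (real N) t\<bar>" for N :: nat and t
  have lim: "(\<lambda>N. \<integral>t. s N t \<partial>M) \<longlonglongrightarrow> (\<integral>t. 0 \<partial>M)"
  proof (rule integral_dominated_convergence[where w="\<lambda>t. \<bar>t\<bar>"])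
    show "(\<lambda>t. 0::real) \<in> borel_measurable M" by simp
    show "\<And>i. s i \<in> borel_measurable M" unfolding s_def by measurable
    show "integrable M (\<lambda>t. \<bar>t\<bar>)" by (rule intabs)
    show "AE t in M. (\<lambda>i. s i t) \<longlonglongrightarrow> 0"
    proof (intro AE_I2 tendsto_eventually)
      fix t :: real
      show "eventually (\<lambda>N. s N t = 0) sequentially"
        unfolding eventually_sequentially
      proof (intro exI allI impI)
        fix N assume "nat \<lceil>\<bar>t\<bar>\<rceil> \<le> N"
        then have "\<bar>t\<bar> \<le> real N" by linarith
        then show "s N t = 0" unfolding s_def by (simp add: clip_id)
      qed
    qed
    show "\<And>i. AE t in M. norm (s i t) \<le> \<bar>t\<bar>"
      unfolding s_def using clip_dist_le by auto
  qed
  then have "eventually (\<lambda>N. (\<integral>t. s N t \<partial>M) < e) sequentially"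
    using e by (intro order_tendstoD(2)) auto
  then obtain N0 where N0: "\<And>N. N \<ge> N0 \<Longrightarrow> (\<integral>t. s N t \<partial>M) < e"
    unfolding eventually_sequentially by blast
  show ?thesis
    using N0[of "Suc N0"] unfolding s_def by (intro exI[of _ "real (Suc N0)"]) auto
qed

end

locale grid = setting +
  fixes L \<delta> :: real
  assumes Lpos: "L > 0" and dpos: "\<delta> > 0"
begin

definition "L' = L + \<delta>"
definition rr :: "real \<Rightarrow> real" where "rr t = \<delta> * real_of_int \<lfloor>clip L t / \<delta>\<rfloor>"
definition G :: "int set" where "G = {\<lfloor>- L / \<delta>\<rfloor>..\<lfloor>L / \<delta>\<rfloor>}"
definition A :: "int \<Rightarrow> real set" where "A l = {t. \<lfloor>clip L t / \<delta>\<rfloor> = l}"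
definition pl :: "int \<Rightarrow> real" where "pl l = measure M (A l)"
definition D1 :: real where "D1 = (\<integral>t. \<bar>t - rr t\<bar> \<partial>M)"
definition clipv :: "(nat \<Rightarrow> real) \<Rightarrow> nat \<Rightarrow> real" where "clipv y j = clip L' (y j)"

lemma L'pos: "L' > 0" unfolding L'_def using Lpos dpos by simp

lemma rr_meas[measurable]: "rr \<in> borel_measurable borel"
  unfolding rr_def by measurable

lemma A_meas[measurable]: "A l \<in> sets borel"
proof -
  have "A l = {t \<in> space borel. \<lfloor>clip L t / \<delta>\<rfloor> = l}" unfolding A_def by simp
  also have "\<dots> \<in> sets borel" by measurable
  finally show ?thesis .
qed

lemma finite_G: "finite G" unfolding G_def by simp

lemma floor_in_G: "\<lfloor>clip L t / \<delta>\<rfloor> \<in> G"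
proof -
  have "- L \<le> clip L t" "clip L t \<le> L" using clip_bound[of L t] Lpos by auto
  then have "- L / \<delta> \<le> clip L t / \<delta>" "clip L t / \<delta> \<le> L / \<delta>"
    using dpos divide_right_mono[of "- L" "clip L t" \<delta>] divide_right_mono[of "clip L t" L \<delta>] by auto
  then show ?thesis unfolding G_def by (auto intro: floor_mono)
qed

lemma G_range: "l \<in> G \<Longrightarrow> \<bar>\<delta> * real_of_int l\<bar> \<le> L'"
proof -
  assume l: "l \<in> G"
  have "real_of_int \<lfloor>- L / \<delta>\<rfloor> \<le> real_of_int l" "real_of_int l \<le> real_of_int \<lfloor>L / \<delta>\<rfloor>"
    using l unfolding G_def by auto
  moreover have "- L / \<delta> - 1 < real_of_int \<lfloor>- L / \<delta>\<rfloor>" "real_of_int \<lfloor>L / \<delta>\<rfloor> \<le> L / \<delta>"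
    by linarith+
  ultimately have a: "- L / \<delta> - 1 < real_of_int l" "real_of_int l \<le> L / \<delta>" by linarith+
  have b1: "\<delta> * (- L / \<delta> - 1) < \<delta> * real_of_int l" using a(1) dpos by (intro mult_strict_left_mono) auto
  have b2: "\<delta> * real_of_int l \<le> \<delta> * (L / \<delta>)" using a(2) dpos by (intro mult_left_mono) auto
  have b3: "\<delta> * (- L / \<delta> - 1) = - L - \<delta>" using dpos by (simp add: field_simps)
  have b4: "\<delta> * (L / \<delta>) = L" using dpos by simp
  have "- L - \<delta> < \<delta> * real_of_int l" using b1 b3 by simp
  moreover have "\<delta> * real_of_int l \<le> L" using b2 b4 by simp
  ultimately show ?thesis unfolding L'_def using dpos by linarith
qed

lemma rr_range: "\<bar>rr t\<bar> \<le> L'"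
  unfolding rr_def using G_range[OF floor_in_G] .

lemma rr_close: "\<bar>t - rr t\<bar> \<le> \<bar>t - clip L t\<bar> + \<delta>"
proof -
  define c where "c = clip L t"
  have f1: "real_of_int \<lfloor>c / \<delta>\<rfloor> \<le> c / \<delta>" "c / \<delta> < real_of_int \<lfloor>c / \<delta>\<rfloor> + 1" by linarith+
  have "real_of_int \<lfloor>c / \<delta>\<rfloor> * \<delta> \<le> c" using f1(1) pos_le_divide_eq[OF dpos] by blast
  moreover have "c < (real_of_int \<lfloor>c / \<delta>\<rfloor> + 1) * \<delta>" using f1(2) pos_divide_less_eq[OF dpos] by blast
  ultimately have "rr t \<le> c" "c < rr t + \<delta>" unfolding rr_def c_def[symmetric] by (simp_all add: algebra_simps)
  then show ?thesis unfolding c_def by linarith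
qed

lemma integrable_dist: "integrable M (\<lambda>t. \<bar>t - rr t\<bar>)"
proof (rule Bochner_Integration.integrable_bound)
  show "integrable M (\<lambda>t. \<bar>t\<bar> + L')" using intabs by simp
  show "(\<lambda>t. \<bar>t - rr t\<bar>) \<in> borel_measurable M" by measurable
  show "AE t in M. norm \<bar>t - rr t\<bar> \<le> norm (\<bar>t\<bar> + L')"
    using rr_range L'pos by (auto intro!: AE_I2) (smt (verit) rr_range)
qed

lemma D1_bound: "D1 \<le> (\<integral>t. \<bar>t - clip L t\<bar> \<partial>M) + \<delta>"
proof -
  have "D1 \<le> (\<integral>t. \<bar>t - clip L t\<bar> + \<delta> \<partial>M)"
    unfolding D1_def
  proof (rule integral_mono[OF integrable_dist])
    show "integrable M (\<lambda>t. \<bar>t - clip L t\<bar> + \<delta>)"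
    proof (intro Bochner_Integration.integrable_add integrable_const)
      show "integrable M (\<lambda>t. \<bar>t - clip L t\<bar>)"
        using Lpos clip_dist_le by (intro Bochner_Integration.integrable_bound[OF intabs]) auto
    qed
    show "\<And>t. \<bar>t - rr t\<bar> \<le> \<bar>t - clip L t\<bar> + \<delta>" by (rule rr_close)
  qed
  also have "\<dots> = (\<integral>t. \<bar>t - clip L t\<bar> \<partial>M) + \<delta>"
    using Lpos clip_dist_le probU
    by (subst Bochner_Integration.integral_add) (auto intro: Bochner_Integration.integrable_bound[OF intabs])
  finally show ?thesis .
qed

lemma cmin_clipv_le: "\<bar>t\<bar> \<le> L' \<Longrightarrow> cmin k (clipv y) t \<le> cmin k y t"
proof -
  assume t: "\<bar>t\<bar> \<le> L'"
  show ?thesis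
  proof (rule cmin_ge[OF k1])
    fix j assume "j < k"
    then have "cmin k (clipv y) t \<le> \<bar>t - clipv y j\<bar>" by (rule cmin_le)
    also have "\<dots> \<le> \<bar>t - y j\<bar>" unfolding clipv_def using t by (rule clip_closer)
    finally show "cmin k (clipv y) t \<le> \<bar>t - y j\<bar>" .
  qed
qed

lemma cmin_clipv_bd: "\<bar>t\<bar> \<le> L' \<Longrightarrow> cmin k (clipv y) t \<le> 2 * L'"
proof -
  assume t: "\<bar>t\<bar> \<le> L'"
  have "cmin k (clipv y) t \<le> \<bar>t - clipv y 0\<bar>" using k1 by (intro cmin_le) auto
  moreover have "\<bar>clipv y 0\<bar> \<le> L'" unfolding clipv_def using clip_bound[of L' "y 0"] L'pos by auto
  ultimately show ?thesis using t by linarith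
qed

lemma rr_sum: "cmin k y' (rr t) = (\<Sum>l\<in>G. indicator (A l) t * cmin k y' (\<delta> * real_of_int l))"
proof -
  have "(\<Sum>l\<in>G. indicator (A l) t * cmin k y' (\<delta> * real_of_int l))
      = (\<Sum>l\<in>G. if \<lfloor>clip L t / \<delta>\<rfloor> = l then cmin k y' (\<delta> * real_of_int l) else 0)"
    by (intro sum.cong refl) (auto simp: A_def indicator_def)
  also have "\<dots> = cmin k y' (rr t)"
    using floor_in_G[of t] finite_G by (simp add: sum.delta rr_def)
  finally show ?thesis by simp
qed

lemma integrable_indA: "integrable M (indicator (A l) :: real \<Rightarrow> real)"
  by (rule integrable_real_indicator) (auto simp: sM emeasure_eq_measure)

lemma int_rr: "(\<integral>t. cmin k y' (rr t) \<partial>M) = (\<Sum>l\<in>G. cmin k y' (\<delta> * real_of_int l) * pl l)"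
proof -
  have "(\<integral>t. cmin k y' (rr t) \<partial>M) = (\<integral>t. (\<Sum>l\<in>G. indicator (A l) t * cmin k y' (\<delta> * real_of_int l)) \<partial>M)"
    by (simp add: rr_sum)
  also have "\<dots> = (\<Sum>l\<in>G. (\<integral>t. indicator (A l) t * cmin k y' (\<delta> * real_of_int l) \<partial>M))"
    by (rule Bochner_Integration.integral_sum) (auto intro: integrable_indA)
  also have "\<dots> = (\<Sum>l\<in>G. cmin k y' (\<delta> * real_of_int l) * pl l)"
    by (intro sum.cong refl) (simp add: pl_def mult.commute)
  finally show ?thesis .
qed

lemma integrable_cmin_rr: "integrable M (\<lambda>t. cmin k y' (rr t))"
  by (subst rr_sum) (auto intro!: integrable_sum integrable_indA)

lemma grid_sum_lower: "OPT - D1 \<le> (\<Sum>l\<in>G. cmin k (clipv y) (\<delta> * real_of_int l) * pl l)"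
proof -
  have "OPT - D1 \<le> cost (clipv y) - D1" using OPT_le by simp
  also have "\<dots> = (\<integral>t. cmin k (clipv y) t - \<bar>t - rr t\<bar> \<partial>M)"
    unfolding cost_def D1_def using integrable_cmin integrable_dist by simp
  also have "\<dots> \<le> (\<integral>t. cmin k (clipv y) (rr t) \<partial>M)"
  proof (rule integral_mono)
    show "integrable M (\<lambda>t. cmin k (clipv y) t - \<bar>t - rr t\<bar>)"
      using integrable_cmin integrable_dist by simp
    show "integrable M (\<lambda>t. cmin k (clipv y) (rr t))" by (rule integrable_cmin_rr)
    fix t
    show "cmin k (clipv y) t - \<bar>t - rr t\<bar> \<le> cmin k (clipv y) (rr t)"
      using cmin_lip_x[OF k1, of "clipv y" t "rr t"] by (simp add: abs_le_iff)
  qed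
  also have "\<dots> = (\<Sum>l\<in>G. cmin k (clipv y) (\<delta> * real_of_int l) * pl l)" by (rule int_rr)
  finally show ?thesis .
qed

end

context grid begin

definition Dn :: "nat \<Rightarrow> (nat \<Rightarrow> real) \<Rightarrow> real" where
  "Dn n x = (1 / real n) * (\<Sum>i<n. \<bar>x i - rr (x i)\<bar>)"
definition Nm :: "nat \<Rightarrow> int \<Rightarrow> (nat \<Rightarrow> real) \<Rightarrow> real" where
  "Nm n l x = (1 / real n) * (\<Sum>i<n. indicator (A l) (x i))"

lemma pl_bounds: "0 \<le> pl l \<and> pl l \<le> 1"
  unfolding pl_def using probU by (simp add: measure_le_1)

lemma SC_pointwise:
  assumes n: "n > 0"
  shows "OPT - D1 - Dn n x - 2 * L' * (\<Sum>l\<in>G. \<bar>Nm n l x - pl l\<bar>) \<le> SC n k x y"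
proof -
  define y' where "y' = clipv y"
  define c where "c l = cmin k y' (\<delta> * real_of_int l)" for l
  have c_bd: "0 \<le> c l \<and> c l \<le> 2 * L'" if "l \<in> G" for l
    unfolding c_def y'_def using cmin_nonneg[OF k1] cmin_clipv_bd[OF G_range[OF that]] by auto
  have a: "cmin k y' (rr (x i)) - \<bar>x i - rr (x i)\<bar> \<le> cmin k y (x i)" for i
  proof -
    have "cmin k y' (rr (x i)) \<le> cmin k y (rr (x i))" unfolding y'_def by (rule cmin_clipv_le[OF rr_range])
    moreover have "cmin k y (rr (x i)) \<le> cmin k y (x i) + \<bar>x i - rr (x i)\<bar>"
      using cmin_lip_x[OF k1, of y "x i" "rr (x i)"] by (simp add: abs_le_iff)
    ultimately show ?thesis by linarith
  qed
  have sum1: "(1 / real n) * (\<Sum>i<n. cmin k y' (rr (x i))) = (\<Sum>l\<in>G. c l * Nm n l x)"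
  proof -
    have "(\<Sum>i<n. cmin k y' (rr (x i))) = (\<Sum>i<n. \<Sum>l\<in>G. indicator (A l) (x i) * c l)"
      unfolding c_def by (simp only: rr_sum)
    also have "\<dots> = (\<Sum>l\<in>G. \<Sum>i<n. indicator (A l) (x i) * c l)" by (rule sum.swap)
    also have "\<dots> = (\<Sum>l\<in>G. c l * (\<Sum>i<n. indicator (A l) (x i)))"
      by (simp add: sum_distrib_left mult.commute)
    finally have h: "(\<Sum>i<n. cmin k y' (rr (x i))) = (\<Sum>l\<in>G. c l * (\<Sum>i<n. indicator (A l) (x i)))" .
    show ?thesis unfolding Nm_def h sum_distrib_left by (simp add: mult_ac)
  qed
  have sum3: "- (2 * L' * (\<Sum>l\<in>G. \<bar>Nm n l x - pl l\<bar>)) \<le> (\<Sum>l\<in>G. c l * (Nm n l x - pl l))"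
  proof -
    have "(\<Sum>l\<in>G. - (2 * L' * \<bar>Nm n l x - pl l\<bar>)) \<le> (\<Sum>l\<in>G. c l * (Nm n l x - pl l))"
    proof (rule sum_mono)
      fix l assume l: "l \<in> G"
      have "- (c l * \<bar>Nm n l x - pl l\<bar>) \<le> c l * (Nm n l x - pl l)"
      proof -
        have "c l * \<bar>Nm n l x - pl l\<bar> = \<bar>c l * (Nm n l x - pl l)\<bar>" using c_bd[OF l] by (simp add: abs_mult)
        then show ?thesis by linarith
      qed
      moreover have "c l * \<bar>Nm n l x - pl l\<bar> \<le> 2 * L' * \<bar>Nm n l x - pl l\<bar>"
        using c_bd[OF l] by (intro mult_right_mono) auto
      ultimately show "- (2 * L' * \<bar>Nm n l x - pl l\<bar>) \<le> c l * (Nm n l x - pl l)" by linarith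
    qed
    then show ?thesis by (simp add: sum_negf sum_distrib_left)
  qed
  have sum2: "(\<Sum>l\<in>G. c l * Nm n l x) = (\<Sum>l\<in>G. c l * pl l) + (\<Sum>l\<in>G. c l * (Nm n l x - pl l))"
    by (simp add: sum.distrib[symmetric] algebra_simps)
  have low: "OPT - D1 \<le> (\<Sum>l\<in>G. c l * pl l)"
    unfolding c_def y'_def by (rule grid_sum_lower)
  have "(1 / real n) * (\<Sum>i<n. cmin k y' (rr (x i)) - \<bar>x i - rr (x i)\<bar>) \<le> (1 / real n) * (\<Sum>i<n. cmin k y (x i))"
    using a by (intro mult_left_mono sum_mono) auto
  moreover have "(1 / real n) * (\<Sum>i<n. cmin k y' (rr (x i)) - \<bar>x i - rr (x i)\<bar>)
      = (1 / real n) * (\<Sum>i<n. cmin k y' (rr (x i))) - Dn n x"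
    unfolding Dn_def by (simp add: sum_subtractf right_diff_distrib)
  ultimately show ?thesis
    unfolding SC_cmin using sum1 sum2 sum3 low by linarith
qed

lemma SC_opt_pointwise:
  assumes n: "n > 0"
  shows "OPT - D1 - Dn n x - 2 * L' * (\<Sum>l\<in>G. \<bar>Nm n l x - pl l\<bar>) \<le> SC_opt n k x"
  unfolding SC_opt_def by (rule cINF_greatest) (auto intro: SC_pointwise[OF n])

lemma ind_meas: "(\<lambda>x. indicator (A l) (x i) :: real) \<in> borel_measurable (PP n)" if "i < n" for i
proof -
  have "(indicator (A l) :: real \<Rightarrow> real) \<in> borel_measurable borel" by measurable
  from measurable_comp[OF comp_meas_borel[OF that] this] show ?thesis by (simp add: comp_def)
qed

lemma Nm_meas[measurable]: "Nm n l \<in> borel_measurable (PP n)"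
  unfolding Nm_def using ind_meas
  by (intro borel_measurable_times borel_measurable_const borel_measurable_sum) auto

lemma Nm_bd: "0 \<le> Nm n l x \<and> Nm n l x \<le> 1"
proof (cases "n = 0")
  case True then show ?thesis by (simp add: Nm_def)
next
  case False
  have "(\<Sum>i<n. indicator (A l) (x i) :: real) \<le> (\<Sum>i<n. 1)" by (intro sum_mono) (simp add: indicator_def)
  then have "(\<Sum>i<n. indicator (A l) (x i) :: real) \<le> real n" by simp
  then show ?thesis using False unfolding Nm_def by (auto simp: sum_nonneg divide_le_eq)
qed

lemma integrable_absNm: "integrable (PP n) (\<lambda>x. \<bar>Nm n l x - pl l\<bar>)"
proof -
  interpret P: prob_space "PP n" by (rule prob_PP)
  show ?thesis
  proof (rule P.integrable_const_bound[where B=1])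
    show "AE x in PP n. norm \<bar>Nm n l x - pl l\<bar> \<le> 1"
    proof (intro AE_I2)
      fix x
      have "0 \<le> Nm n l x" "Nm n l x \<le> 1" "0 \<le> pl l" "pl l \<le> 1" using Nm_bd[of n l x] pl_bounds[of l] by auto
      then show "norm \<bar>Nm n l x - pl l\<bar> \<le> 1" by (simp add: abs_le_iff)
    qed
  qed measurable
qed

lemma E_abs_Nm:
  assumes n: "n > 0" and eta: "\<eta> > 0"
  shows "(\<integral>x. \<bar>Nm n l x - pl l\<bar> \<partial>PP n) \<le> \<eta> + 1 / (real n * \<eta>)"
proof -
  interpret P: prob_space "PP n" by (rule prob_PP)
  define g where "g t = indicator (A l) t - pl l" for t :: real
  have gm: "g \<in> borel_measurable borel" unfolding g_def by measurable
  have gb: "\<bar>g t\<bar> \<le> 1" for t using pl_bounds[of l] unfolding g_def by (auto simp: indicator_def)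
  have g0: "(\<integral>t. g t \<partial>M) = 0"
    unfolding g_def using integrable_indA probU by (simp add: pl_def)
  have zg: "Nm n l x - pl l = (1 / real n) * (\<Sum>i<n. g (x i))" for x
    unfolding g_def Nm_def using n by (simp add: sum_subtractf right_diff_distrib)
  have int2: "integrable (PP n) (\<lambda>x. (Nm n l x - pl l)\<^sup>2)"
  proof (rule P.integrable_const_bound[where B=1])
    show "AE x in PP n. norm ((Nm n l x - pl l)\<^sup>2) \<le> 1"
    proof (intro AE_I2)
      fix x
      have "\<bar>Nm n l x - pl l\<bar> \<le> 1" using Nm_bd[of n l x] pl_bounds[of l] by (auto simp: abs_le_iff)
      then have "\<bar>Nm n l x - pl l\<bar>\<^sup>2 \<le> 1\<^sup>2" by (intro power_mono) auto
      then show "norm ((Nm n l x - pl l)\<^sup>2) \<le> 1" by simp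
    qed
    show "(\<lambda>x. (Nm n l x - pl l)\<^sup>2) \<in> borel_measurable (PP n)" by measurable
  qed
  have "(\<integral>x. \<bar>Nm n l x - pl l\<bar> \<partial>PP n) \<le> (\<integral>x. \<eta> + (Nm n l x - pl l)\<^sup>2 / \<eta> \<partial>PP n)"
    using int2 integrable_absNm abs_le_sq[OF eta] by (intro integral_mono) auto
  also have "\<dots> = \<eta> + (\<integral>x. (Nm n l x - pl l)\<^sup>2 \<partial>PP n) / \<eta>"
    using int2 P.prob_space by simp
  also have "(\<integral>x. (Nm n l x - pl l)\<^sup>2 \<partial>PP n) \<le> 1 / real n"
    unfolding zg by (rule variance_bound[OF gm gb g0 n])
  then have "(\<integral>x. (Nm n l x - pl l)\<^sup>2 \<partial>PP n) / \<eta> \<le> (1 / real n) / \<eta>"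
    using eta by (intro divide_right_mono) auto
  also have "(1 / real n) / \<eta> = 1 / (real n * \<eta>)" by simp
  finally show ?thesis by simp
qed

lemma integrable_Dn: "integrable (PP n) (Dn n)"
  unfolding Dn_def[abs_def] by (rule integrable_mean[OF integrable_dist])

lemma E_Dn: "n > 0 \<Longrightarrow> (\<integral>x. Dn n x \<partial>PP n) = D1"
  unfolding Dn_def D1_def by (rule integral_mean[OF integrable_dist])

lemma E_SC_opt_grid:
  assumes n: "n > 0" and eta: "\<eta> > 0"
  shows "OPT - 2 * D1 - 2 * L' * (real (card G) * (\<eta> + 1 / (real n * \<eta>))) \<le> (\<integral>x. SC_opt n k x \<partial>PP n)"
proof -
  interpret P: prob_space "PP n" by (rule prob_PP)
  define S where "S x = (\<Sum>l\<in>G. \<bar>Nm n l x - pl l\<bar>)" for x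
  have intS: "integrable (PP n) S" unfolding S_def[abs_def] by (rule Bochner_Integration.integrable_sum[where I=G and M="PP n" and f="\<lambda>l x. \<bar>Nm n l x - pl l\<bar>"]) (rule integrable_absNm)
  have ES: "(\<integral>x. S x \<partial>PP n) \<le> real (card G) * (\<eta> + 1 / (real n * \<eta>))"
  proof -
    have "(\<integral>x. S x \<partial>PP n) = (\<Sum>l\<in>G. (\<integral>x. \<bar>Nm n l x - pl l\<bar> \<partial>PP n))"
      unfolding S_def by (rule Bochner_Integration.integral_sum[where I=G and M="PP n" and f="\<lambda>l x. \<bar>Nm n l x - pl l\<bar>"]) (rule integrable_absNm)
    also have "\<dots> \<le> (\<Sum>l\<in>G. \<eta> + 1 / (real n * \<eta>))" by (intro sum_mono E_abs_Nm[OF n eta])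
    finally show ?thesis by simp
  qed
  define B where "B x = OPT - D1 - Dn n x - 2 * L' * S x" for x
  have intB: "integrable (PP n) B" unfolding B_def[abs_def] using intS integrable_Dn by simp
  have EB: "(\<integral>x. B x \<partial>PP n) = OPT - D1 - D1 - 2 * L' * (\<integral>x. S x \<partial>PP n)"
    unfolding B_def using intS integrable_Dn E_Dn[OF n] P.prob_space by simp
  have "(\<integral>x. B x \<partial>PP n) \<le> (\<integral>x. SC_opt n k x \<partial>PP n)"
    using intB integrable_SC_opt SC_opt_pointwise[OF n] unfolding B_def S_def by (intro integral_mono) auto
  moreover have "2 * L' * (\<integral>x. S x \<partial>PP n) \<le> 2 * L' * (real (card G) * (\<eta> + 1 / (real n * \<eta>)))"
    using ES L'pos by (intro mult_left_mono) auto
  ultimately show ?thesis using EB by linarith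
qed

end

context setting begin

lemma E_SC_opt_lower:
  assumes e: "e > 0"
  shows "\<exists>N. \<forall>n\<ge>N. OPT - e \<le> (\<integral>x. SC_opt n k x \<partial>PP n)"
proof -
  obtain L where L: "L > 0" and tail: "(\<integral>t. \<bar>t - clip L t\<bar> \<partial>M) < e / 8"
    using tail_small[of "e / 8"] e by auto
  define \<delta> where "\<delta> = e / 8"
  have d: "\<delta> > 0" using e unfolding \<delta>_def by simp
  interpret g: grid M \<rho> I k L \<delta>
    using setting_axioms L d by (simp add: grid_def grid_axioms_def)
  have D1: "g.D1 \<le> e / 4" using g.D1_bound tail unfolding \<delta>_def by linarith
  define K where "K = 2 * g.L' * real (card g.G)"
  have K0: "0 \<le> K" unfolding K_def using g.L'pos by simp
  define \<eta> where "\<eta> = e / (8 * (K + 1))"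
  have eta: "\<eta> > 0" unfolding \<eta>_def using e K0 by simp
  have Keta: "K * \<eta> \<le> e / 8"
  proof -
    have "K * \<eta> = e / 8 * (K / (K + 1))" unfolding \<eta>_def using K0 by (simp add: field_simps)
    also have "\<dots> \<le> e / 8 * 1" using e K0 by (intro mult_left_mono) auto
    finally show ?thesis by simp
  qed
  define N where "N = nat \<lceil>8 * (K + 1) / (e * \<eta>)\<rceil> + 1"
  show ?thesis
  proof (intro exI allI impI)
    fix n assume nN: "N \<le> n"
    then have n: "n > 0" unfolding N_def by simp
    have "8 * (K + 1) / (e * \<eta>) \<le> real n" using nN unfolding N_def by linarith
    then have "8 * (K + 1) \<le> real n * (e * \<eta>)" using e eta by (simp add: pos_divide_le_eq)
    then have h: "8 * (K + 1) \<le> e * (real n * \<eta>)" by (simp add: algebra_simps)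
    have pos: "0 < real n * \<eta>" using n eta by simp
    have "K / (real n * \<eta>) \<le> e / 8"
    proof -
      have "K * 8 \<le> 8 * (K + 1)" by simp
      then have "K * 8 \<le> e * (real n * \<eta>)" using h by (rule order_trans)
      then show ?thesis using pos by (simp add: divide_simps)
    qed
    moreover have eq: "2 * g.L' * (real (card g.G) * (\<eta> + 1 / (real n * \<eta>))) = K * \<eta> + K / (real n * \<eta>)"
      unfolding K_def by (simp add: algebra_simps)
    moreover have "OPT - 2 * g.D1 - (K * \<eta> + K / (real n * \<eta>)) \<le> (\<integral>x. SC_opt n k x \<partial>PP n)"
      using g.E_SC_opt_grid[OF n eta] unfolding eq .
    ultimately show "OPT - e \<le> (\<integral>x. SC_opt n k x \<partial>PP n)" using D1 Keta e by linarith
  qed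
qed

lemma E_SC_opt_lim: "(\<lambda>n. \<integral>x. SC_opt n k x \<partial>PP n) \<longlonglongrightarrow> OPT"
proof (rule order_tendstoI)
  fix a assume "OPT < a"
  then show "eventually (\<lambda>n. (\<integral>x. SC_opt n k x \<partial>PP n) < a) sequentially"
    using E_SC_opt_upper by (intro always_eventually allI) (rule le_less_trans)
next
  fix a assume a: "a < OPT"
  obtain N where N: "\<forall>n\<ge>N. OPT - (OPT - a) / 2 \<le> (\<integral>x. SC_opt n k x \<partial>PP n)"
    using E_SC_opt_lower[of "(OPT - a) / 2"] a by auto
  show "eventually (\<lambda>n. a < (\<integral>x. SC_opt n k x \<partial>PP n)) sequentially"
    unfolding eventually_sequentially
  proof (intro exI allI impI)
    fix n assume "N \<le> n"
    then have "OPT - (OPT - a) / 2 \<le> (\<integral>x. SC_opt n k x \<partial>PP n)" using N by blast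
    moreover have "a < OPT - (OPT - a) / 2" using a by (simp add: field_simps)
    ultimately show "a < (\<integral>x. SC_opt n k x \<partial>PP n)" by linarith
  qed
qed

end

context setting begin

lemma SA_I: "is_interval I" "closed I" "interior I \<noteq> {}" "\<And>x. x \<notin> I \<Longrightarrow> \<rho> x = 0"
  "\<And>x. x \<in> interior I \<Longrightarrow> \<rho> x > 0"
  using SA unfolding standing_assumptions_def by auto

lemmas rho_meas'[measurable] = rho_meas

lemma I_ne: "I \<noteq> {}" using SA_I(3) interior_subset by blast

lemma emeasure_M: "A \<in> sets borel \<Longrightarrow> emeasure M A = (\<integral>\<^sup>+x. ennreal (\<rho> x) * indicator A x \<partial>lborel)"
  unfolding Mdens by (subst emeasure_density) auto

lemma null_outside:
  assumes A: "A \<in> sets borel" and AI: "A \<inter> I = {}"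
  shows "measure M A = 0"
proof -
  have z: "ennreal (\<rho> x) * indicator A x = 0" for x
  proof (cases "x \<in> A")
    case True
    then have "x \<notin> I" using AI by blast
    then show ?thesis by (simp add: SA_I(4))
  qed simp
  have "emeasure M A = (\<integral>\<^sup>+x. 0 \<partial>lborel)"
    unfolding emeasure_M[OF A] z by simp
  then show ?thesis by (simp add: measure_def)
qed

lemma pos_inside:
  assumes ab: "a < b" and sub: "{a<..<b} \<subseteq> I"
  shows "0 < measure M {a<..<b}"
proof -
  have int: "{a<..<b} \<subseteq> interior I" using sub by (intro interior_maximal) auto
  have "emeasure M {a<..<b} \<noteq> 0"
  proof
    assume "emeasure M {a<..<b} = 0"
    then have "(\<integral>\<^sup>+x. ennreal (\<rho> x) * indicator {a<..<b} x \<partial>lborel) = 0"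
      using emeasure_M[of "{a<..<b}"] by simp
    then have "AE x in lborel. ennreal (\<rho> x) * indicator {a<..<b} x = 0"
      by (subst (asm) nn_integral_0_iff_AE) auto
    then have "AE x in lborel. x \<notin> {a<..<b}"
    proof eventually_elim
      case (elim x)
      show ?case
      proof
        assume x: "x \<in> {a<..<b}"
        then have "\<rho> x > 0" using int SA_I(5) by auto
        then show False using elim x by simp
      qed
    qed
    then have "emeasure lborel {a<..<b} = 0"
      by (subst (asm) AE_iff_measurable[of "{a<..<b}"]) auto
    then show False using ab by simp
  qed
  then show ?thesis
    by (simp add: emeasure_eq_measure zero_less_measure_iff)
qed

lemma cdf_lib: "Distribution_Functions.cdf M = cdf M"
  by (simp add: fun_eq_iff Distribution_Functions.cdf_def Defs.cdf_def)

lemma cdf_cont: "isCont (cdf M) x"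
proof -
  interpret RD: real_distribution M by (rule real_distr)
  show ?thesis using RD.isCont_cdf[of x] atomless by (simp add: cdf_lib)
qed

lemma cdf_mono: "x \<le> y \<Longrightarrow> cdf M x \<le> cdf M y"
  unfolding Defs.cdf_def by (intro finite_measure_mono) auto

lemma cdf_diff: "x < y \<Longrightarrow> cdf M y - cdf M x = measure M {x<..y}"
proof -
  interpret RD: real_distribution M by (rule real_distr)
  assume "x < y" then show ?thesis using RD.cdf_diff_eq by (simp add: cdf_lib)
qed

lemma quantile:
  assumes t: "0 < t" "t < 1"
  shows "cdf M (cdf_inv M t) = t"
    and "\<And>x. x < cdf_inv M t \<Longrightarrow> cdf M x < t"
    and "\<And>e. e > 0 \<Longrightarrow> t < cdf M (cdf_inv M t + e)"
proof -
  interpret RD: real_distribution M by (rule real_distr)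
  define S where "S = {x. t \<le> cdf M x}"
  define Q where "Q = cdf_inv M t"
  have QS: "Q = Inf S" unfolding Q_def S_def cdf_inv_def ..
  have "eventually (\<lambda>x. t < cdf M x) at_top"
    using RD.cdf_lim_at_top_prob t unfolding cdf_lib by (intro order_tendstoD(1)) auto
  then obtain x1 where "t < cdf M x1" by (auto simp: eventually_at_top_linorder)
  then have "x1 \<in> S" unfolding S_def by simp
  then have Sne: "S \<noteq> {}" by blast
  have "eventually (\<lambda>x. cdf M x < t) at_bot"
    using RD.cdf_lim_at_bot t unfolding cdf_lib by (intro order_tendstoD(2)) auto
  then obtain x0 where x0: "\<And>x. x \<le> x0 \<Longrightarrow> cdf M x < t" by (auto simp: eventually_at_bot_linorder)
  have Sbdd: "bdd_below S"
  proof (rule bdd_belowI)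
    fix x assume "x \<in> S"
    then have "t \<le> cdf M x" by (simp add: S_def)
    then have "\<not> x \<le> x0" using x0[of x] by linarith
    then show "x0 \<le> x" by simp
  qed
  have Scl: "closed S"
    unfolding S_def using cdf_cont
    by (intro closed_Collect_le continuous_on_const continuous_at_imp_continuous_on) auto
  have QinS: "Q \<in> S" unfolding QS by (rule closed_contains_Inf[OF Sne Sbdd Scl])
  show below: "cdf M x < t" if "x < Q" for x
  proof (rule ccontr)
    assume "\<not> cdf M x < t"
    then have "x \<in> S" unfolding S_def by simp
    then have "Q \<le> x" unfolding QS using Sbdd by (rule cInf_lower)
    then show False using that by simp
  qed
  have lim: "(\<lambda>n. cdf M (Q - 1 / real (Suc n))) \<longlonglongrightarrow> cdf M Q"
  proof (rule isCont_tendsto_compose[OF cdf_cont])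
    have "(\<lambda>n. 1 / real (Suc n)) \<longlonglongrightarrow> 0" using LIMSEQ_inverse_real_of_nat by (simp add: inverse_eq_divide)
    from tendsto_diff[OF tendsto_const[of Q] this] show "(\<lambda>n. Q - 1 / real (Suc n)) \<longlonglongrightarrow> Q" by simp
  qed
  have le: "cdf M (Q - 1 / real (Suc n)) \<le> t" for n by (intro less_imp_le below) simp
  have "cdf M Q \<le> t" by (rule LIMSEQ_le_const2[OF lim]) (use le in auto)
  moreover have "t \<le> cdf M Q" using QinS unfolding S_def by simp
  ultimately have FQ: "cdf M Q = t" by simp
  then show "cdf M (cdf_inv M t) = t" unfolding Q_def .
  fix e :: real assume e: "e > 0"
  have "\<exists>a\<in>I. a \<le> Q"
  proof (rule ccontr)
    assume "\<not> (\<exists>a\<in>I. a \<le> Q)"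
    then have "{..Q} \<inter> I = {}" by auto
    then have "cdf M Q = 0" unfolding Defs.cdf_def by (intro null_outside) auto
    then show False using FQ t by simp
  qed
  then obtain a where a: "a \<in> I" "a \<le> Q" by blast
  have "\<exists>b\<in>I. Q < b"
  proof (rule ccontr)
    assume "\<not> (\<exists>b\<in>I. Q < b)"
    then have "{Q<..} \<inter> I = {}" by auto
    then have "measure M {Q<..} = 0" by (intro null_outside) auto
    moreover have "measure M {Q<..} = 1 - cdf M Q"
    proof -
      have "{Q<..} = space M - {..Q}" by auto
      then show ?thesis unfolding Defs.cdf_def using prob_compl[of "{..Q}"] by simp
    qed
    ultimately show False using FQ t by simp
  qed
  then obtain b where b: "b \<in> I" "Q < b" by blast
  define c where "c = min b (Q + e)"
  have Qc: "Q < c" unfolding c_def using b e by simp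
  have "{Q<..<c} \<subseteq> I"
  proof
    fix x assume x: "x \<in> {Q<..<c}"
    then have "a \<le> x" "x \<le> b" using a unfolding c_def by auto
    then show "x \<in> I" using SA_I(1) a(1) b(1) unfolding is_interval_1 by blast
  qed
  then have "0 < measure M {Q<..<c}" using Qc by (rule pos_inside[rotated])
  also have "\<dots> \<le> measure M {Q<..Q + e}" unfolding c_def by (intro finite_measure_mono) auto
  also have "\<dots> = cdf M (Q + e) - cdf M Q" using e by (simp add: cdf_diff)
  finally show "t < cdf M (cdf_inv M t + e)" using FQ unfolding Q_def by simp
qed

lemma quantile_mono:
  assumes "0 < t" "t \<le> t'" "t' < 1"
  shows "cdf_inv M t \<le> cdf_inv M t'"
proof (rule ccontr)
  assume "\<not> cdf_inv M t \<le> cdf_inv M t'"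
  then have "cdf M (cdf_inv M t') < t" using assms by (intro quantile(2)) auto
  moreover have "cdf M (cdf_inv M t') = t'" using assms by (intro quantile(1)) auto
  ultimately show False using assms by simp
qed

end

lemma mid_le1: "(a::real) \<le> b \<Longrightarrow> (a + b) / 2 \<le> x \<Longrightarrow> \<bar>x - b\<bar> \<le> \<bar>x - a\<bar>"
  by (auto simp: abs_if field_simps)

lemma mid_le2: "(a::real) \<le> b \<Longrightarrow> x \<le> (a + b) / 2 \<Longrightarrow> \<bar>x - a\<bar> \<le> \<bar>x - b\<bar>"
  by (auto simp: abs_if field_simps)

locale pct = setting +
  fixes v :: "nat \<Rightarrow> real"
  assumes pv: "percentile_vector k v" and v01: "\<forall>j<k. 0 < v j \<and> v j < 1"
begin

definition q :: "nat \<Rightarrow> real" where "q j = cdf_inv M (v j)"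
definition mq :: "nat \<Rightarrow> real" where "mq j = (q (j - 1) + q j) / 2"

lemma v_mono: "i \<le> j \<Longrightarrow> j < k \<Longrightarrow> v i \<le> v j"
proof (induction j)
  case 0 then show ?case by simp
next
  case (Suc j)
  show ?case
  proof (cases "i = Suc j")
    case True then show ?thesis by simp
  next
    case False
    then have "i \<le> j" using Suc by simp
    then have "v i \<le> v j" using Suc by simp
    also have "v j \<le> v (Suc j)" using pv Suc unfolding percentile_vector_def by blast
    finally show ?thesis .
  qed
qed

lemma q_mono: "i \<le> j \<Longrightarrow> j < k \<Longrightarrow> q i \<le> q j"
  unfolding q_def using v01 v_mono by (intro quantile_mono) auto

lemma mq_mono: "1 \<le> i \<Longrightarrow> i \<le> j \<Longrightarrow> j < k \<Longrightarrow> mq i \<le> mq j"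
proof -
  assume h: "1 \<le> i" "i \<le> j" "j < k"
  have "q (i - 1) \<le> q (j - 1)" "q i \<le> q j" using h by (intro q_mono; simp)+
  then show ?thesis unfolding mq_def by simp
qed

definition idxQ :: "real \<Rightarrow> nat" where
  "idxQ x = (LEAST j. k \<le> Suc j \<or> x \<le> mq (Suc j))"

lemma idxQ_iff: "idxQ x = j \<longleftrightarrow> j < k \<and> (k \<le> Suc j \<or> x \<le> mq (Suc j)) \<and> (j = 0 \<or> mq j < x)"
proof
  assume a: "idxQ x = j"
  have C: "k \<le> Suc j \<or> x \<le> mq (Suc j)" unfolding a[symmetric] idxQ_def
    by (rule LeastI[of _ "k - 1"]) (use k1 in simp)
  have "j \<le> k - 1" unfolding a[symmetric] idxQ_def by (rule Least_le) (use k1 in simp)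
  then have jk: "j < k" using k1 by simp
  have "mq j < x" if "j \<noteq> 0"
  proof -
    have "\<not> (k \<le> Suc (j - 1) \<or> x \<le> mq (Suc (j - 1)))"
      using that unfolding a[symmetric] idxQ_def by (intro not_less_Least) (use that a in \<open>auto simp: idxQ_def\<close>)
    then show ?thesis using that by simp
  qed
  then show "j < k \<and> (k \<le> Suc j \<or> x \<le> mq (Suc j)) \<and> (j = 0 \<or> mq j < x)" using jk C by blast
next
  assume h: "j < k \<and> (k \<le> Suc j \<or> x \<le> mq (Suc j)) \<and> (j = 0 \<or> mq j < x)"
  show "idxQ x = j" unfolding idxQ_def
  proof (rule Least_equality)
    show "k \<le> Suc j \<or> x \<le> mq (Suc j)" using h by blast
    fix y assume y: "k \<le> Suc y \<or> x \<le> mq (Suc y)"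
    show "j \<le> y"
    proof (rule ccontr)
      assume "\<not> j \<le> y"
      then have yj: "Suc y \<le> j" by simp
      then have "j \<noteq> 0" by simp
      then have "mq j < x" using h by blast
      moreover have "\<not> k \<le> Suc y" using yj h by simp
      then have "x \<le> mq (Suc y)" using y by blast
      moreover have "mq (Suc y) \<le> mq j" using yj h by (intro mq_mono) auto
      ultimately show False by simp
    qed
  qed
qed

lemma idxQ_lt: "idxQ x < k"
  using idxQ_iff by blast

lemma idxQ_meas: "{x. idxQ x = j} \<in> sets borel"
proof -
  have "{x. idxQ x = j} = {x \<in> space borel. j < k \<and> (k \<le> Suc j \<or> x \<le> mq (Suc j)) \<and> (j = 0 \<or> mq j < x)}"
    using idxQ_iff by auto
  also have "\<dots> \<in> sets borel" by measurable
  finally show ?thesis .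
qed

lemma idxQ_cmin: "cmin k q x = \<bar>x - q (idxQ x)\<bar>"
proof -
  define j where "j = idxQ x"
  have h: "j < k" "k \<le> Suc j \<or> x \<le> mq (Suc j)" "j = 0 \<or> mq j < x"
    using idxQ_iff[of x j] unfolding j_def by auto
  have le: "\<bar>x - q j\<bar> \<le> \<bar>x - q i\<bar>" if i: "i < k" for i
  proof (cases i j rule: linorder_cases)
    case less
    then have "j \<noteq> 0" by simp
    then have mj: "mq j < x" using h by blast
    have "q i \<le> q (j - 1)" using less h by (intro q_mono) auto
    then have "(q i + q j) / 2 \<le> mq j" unfolding mq_def by simp
    moreover have "q i \<le> q j" using less h by (intro q_mono) auto
    ultimately show ?thesis using mj by (intro mid_le1) auto
  next
    case equal then show ?thesis by simp
  next
    case greater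
    then have "\<not> k \<le> Suc j" using i by simp
    then have mj: "x \<le> mq (Suc j)" using h by blast
    have "q (Suc j) \<le> q i" using greater i by (intro q_mono) auto
    then have "mq (Suc j) \<le> (q j + q i) / 2" unfolding mq_def by simp
    moreover have "q j \<le> q i" using greater i by (intro q_mono) auto
    ultimately show ?thesis using mj by (intro mid_le2) auto
  qed
  have "cmin k q x \<le> \<bar>x - q j\<bar>" using h(1) by (rule cmin_le)
  moreover have "\<bar>x - q j\<bar> \<le> cmin k q x" using le by (intro cmin_ge[OF k1])
  ultimately show ?thesis unfolding j_def by simp
qed

end

context setting begin

lemma cdf_ext_low: "cdf_ext M (Inf (ereal ` I)) = 0"
proof -
  obtain x0 where x0: "x0 \<in> I" using I_ne by blast
  have le: "Inf (ereal ` I) \<le> ereal x" if "x \<in> I" for x using that by (intro Inf_lower) auto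
  show ?thesis
  proof (cases "Inf (ereal ` I)")
    case (real a)
    have "a \<le> x" if "x \<in> I" for x using le[OF that] real by simp
    then have "{..<a} \<inter> I = {}" by force
    then have z: "measure M {..<a} = 0" by (intro null_outside) auto
    have "measure M {..a} = measure M ({..<a} \<union> {a})" by (intro arg_cong[where f="measure M"]) auto
    also have "\<dots> = measure M {..<a} + measure M {a}" by (intro finite_measure_Union) auto
    finally have "measure M {..a} = 0" using z atomless by simp
    then show ?thesis using real by (simp add: cdf_ext_def Defs.cdf_def)
  next
    case PInf
    then show ?thesis using le[OF x0] by simp
  next
    case MInf
    then show ?thesis by (simp add: cdf_ext_def)
  qed
qed

lemma cdf_ext_up: "cdf_ext M (Sup (ereal ` I)) = 1"
proof -
  obtain x0 where x0: "x0 \<in> I" using I_ne by blast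
  have le: "ereal x \<le> Sup (ereal ` I)" if "x \<in> I" for x using that by (intro Sup_upper) auto
  show ?thesis
  proof (cases "Sup (ereal ` I)")
    case (real b)
    have "x \<le> b" if "x \<in> I" for x using le[OF that] real by simp
    then have "{b<..} \<inter> I = {}" by force
    then have z: "measure M {b<..} = 0" by (intro null_outside) auto
    have "{b<..} = space M - {..b}" by auto
    then have "measure M {b<..} = 1 - measure M {..b}" using prob_compl[of "{..b}"] by simp
    then have "measure M {..b} = 1" using z by simp
    then show ?thesis using real by (simp add: cdf_ext_def Defs.cdf_def)
  next
    case PInf
    then show ?thesis by (simp add: cdf_ext_def)
  next
    case MInf
    then show ?thesis using le[OF x0] by simp
  qed
qed

end

context pct begin

definition zz :: "nat \<Rightarrow> ereal" where
  "zz j = (if j = 0 then Inf (ereal ` I) else if j = k then Sup (ereal ` I) else ereal (mq j))"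

lemma cdf_ext_mid: "0 < j \<Longrightarrow> j < k \<Longrightarrow> cdf_ext M (zz j) = cdf M (mq j)"
  by (simp add: zz_def cdf_ext_def)

lemma weight:
  assumes j: "j < k"
  shows "measure M {x. idxQ x = j} = cdf_ext M (zz (Suc j)) - cdf_ext M (zz j)"
proof -
  have iff: "{x. idxQ x = j} = {x. (k \<le> Suc j \<or> x \<le> mq (Suc j)) \<and> (j = 0 \<or> mq j < x)}"
    using idxQ_iff j by auto
  show ?thesis
  proof (cases "j = 0")
    case True
    note j0 = True
    show ?thesis
    proof (cases "k = 1")
      case True
      then have "{x. idxQ x = j} = space M" using iff j0 by auto
      moreover have "zz (Suc j) = Sup (ereal ` I)" "zz j = Inf (ereal ` I)" unfolding zz_def using True j0 by auto
      ultimately show ?thesis using prob_space cdf_ext_low cdf_ext_up by simp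
    next
      case False
      then have "{x. idxQ x = j} = {..mq 1}" using iff j0 k1 by auto
      then show ?thesis using False j0 k1 cdf_ext_low cdf_ext_mid[of 1]
        by (simp add: zz_def Defs.cdf_def)
    qed
  next
    case False
    note jn0 = False
    show ?thesis
    proof (cases "Suc j = k")
      case True
      have kj: "k \<le> Suc j" using True by simp
      have e: "{x. idxQ x = j} = {mq j<..}" unfolding iff using kj jn0 by auto
      have "{mq j<..} = space M - {..mq j}" by auto
      then have m: "measure M {mq j<..} = 1 - cdf M (mq j)"
        using prob_compl[of "{..mq j}"] by (simp add: Defs.cdf_def)
      have z1: "zz (Suc j) = Sup (ereal ` I)" unfolding zz_def using True by simp
      have c: "cdf_ext M (zz j) = cdf M (mq j)" using jn0 j by (intro cdf_ext_mid) auto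
      show ?thesis unfolding e z1 cdf_ext_up c using m by simp
    next
      case False
      have sj: "Suc j < k" using False j by simp
      have e: "{x. idxQ x = j} = {mq j<..mq (Suc j)}" unfolding iff using jn0 sj by auto
      have "mq j \<le> mq (Suc j)" using jn0 sj by (intro mq_mono) auto
      then have "measure M {mq j<..mq (Suc j)} = cdf M (mq (Suc j)) - cdf M (mq j)"
      proof (cases "mq j = mq (Suc j)")
        case True then show ?thesis by simp
      next
        case False
        then have "mq j < mq (Suc j)" using \<open>mq j \<le> mq (Suc j)\<close> by simp
        then show ?thesis by (simp add: cdf_diff)
      qed
      moreover have "cdf_ext M (zz j) = cdf M (mq j)" using jn0 j by (intro cdf_ext_mid) auto
      moreover have "cdf_ext M (zz (Suc j)) = cdf M (mq (Suc j))" using sj by (intro cdf_ext_mid) auto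
      ultimately show ?thesis unfolding e by simp
    qed
  qed
qed

lemma nuQ_eq: "nu_Q M I k v = discrete_measure k (\<lambda>j. measure M {x. idxQ x = j}) q"
proof -
  have "nu_Q M I k v = discrete_measure k (\<lambda>j. cdf_ext M (zz (Suc j)) - cdf_ext M (zz j)) q"
    unfolding nu_Q_def Let_def zz_def mq_def q_def ..
  also have "\<dots> = discrete_measure k (\<lambda>j. measure M {x. idxQ x = j}) q"
    by (rule discrete_measure_cong) (simp add: weight)
  finally show ?thesis .
qed

lemma W1_nuQ: "W1 M (nu_Q M I k v) = ennreal (cost q)"
proof (rule antisym)
  show "W1 M (nu_Q M I k v) \<le> ennreal (cost q)"
    unfolding nuQ_eq nn_cost[symmetric]
    using idxQ_lt idxQ_meas idxQ_cmin by (intro W1_upper[OF prob sM k1]) auto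
  show "ennreal (cost q) \<le> W1 M (nu_Q M I k v)" unfolding nuQ_eq by (rule W1_ge_cost)
qed

end

definition os :: "nat \<Rightarrow> nat \<Rightarrow> (nat \<Rightarrow> real) \<Rightarrow> real" where
  "os n m x = sort (map x [0..<n]) ! m"

lemma sort_len: "length (sort (map x [0..<n])) = n" by simp

lemma sort_sorted: "sorted (sort (map x [0..<n]))" by simp

lemma sum_sort: "(\<Sum>i<n. f (x i)) = (\<Sum>i<n. f (sort (map x [0..<n]) ! i))"
proof -
  have "(\<Sum>i<n. f (x i)) = sum_list (map f (map x [0..<n]))"
    by (simp add: sum_list_sum_nth atLeast0LessThan)
  also have "\<dots> = sum_list (map f (sort (map x [0..<n])))"
    by (metis mset_map mset_sort sum_mset_sum_list)
  also have "\<dots> = (\<Sum>i<n. f (sort (map x [0..<n]) ! i))"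
    by (simp add: sum_list_sum_nth atLeast0LessThan)
  finally show ?thesis .
qed

lemma os_mem: "m < n \<Longrightarrow> \<exists>i<n. os n m x = x i"
proof -
  assume m: "m < n"
  then have "os n m x \<in> set (sort (map x [0..<n]))" unfolding os_def by (intro nth_mem) simp
  then show ?thesis by auto
qed

lemma os_abs: "m < n \<Longrightarrow> \<bar>os n m x\<bar> \<le> (\<Sum>i<n. \<bar>x i\<bar>)"
proof -
  assume "m < n"
  then obtain i where i: "i < n" "os n m x = x i" using os_mem by blast
  have "\<bar>x i\<bar> \<le> (\<Sum>i<n. \<bar>x i\<bar>)" using i by (intro member_le_sum) auto
  then show ?thesis using i by simp
qed

lemma os_le_iff:
  assumes m: "m < n"
  shows "os n m x \<le> t \<longleftrightarrow> real (Suc m) \<le> (\<Sum>i<n. indicator {..t} (x i))"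
proof -
  define s where "s = sort (map x [0..<n])"
  have ls: "length s = n" and ss: "sorted s" unfolding s_def by simp_all
  have sum: "(\<Sum>i<n. indicator {..t} (x i) :: real) = (\<Sum>i<n. indicator {..t} (s ! i))"
    unfolding s_def by (rule sum_sort)
  show ?thesis
  proof
    assume le: "os n m x \<le> t"
    have "real (Suc m) = (\<Sum>i\<in>{..m}. 1::real)" by simp
    also have "\<dots> = (\<Sum>i\<in>{..m}. indicator {..t} (s ! i))"
    proof (intro sum.cong refl)
      fix i assume "i \<in> {..m}"
      then have "s ! i \<le> s ! m" using ss ls m by (intro sorted_nth_mono) auto
      then show "1 = (indicator {..t} (s ! i) :: real)" using le unfolding os_def s_def[symmetric] by simp
    qed
    also have "\<dots> \<le> (\<Sum>i<n. indicator {..t} (s ! i))"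
      using m by (intro sum_mono2) auto
    finally show "real (Suc m) \<le> (\<Sum>i<n. indicator {..t} (x i))" using sum by simp
  next
    assume h: "real (Suc m) \<le> (\<Sum>i<n. indicator {..t} (x i))"
    show "os n m x \<le> t"
    proof (rule ccontr)
      assume "\<not> os n m x \<le> t"
      then have gt: "t < s ! m" unfolding os_def s_def by simp
      have "(\<Sum>i<n. indicator {..t} (s ! i) :: real) = (\<Sum>i<m. indicator {..t} (s ! i))"
      proof (rule sum.mono_neutral_cong_right)
        show "\<forall>i\<in>{..<n} - {..<m}. (indicator {..t} (s ! i) :: real) = 0"
        proof
          fix i assume "i \<in> {..<n} - {..<m}"
          then have "s ! m \<le> s ! i" using ss ls by (intro sorted_nth_mono) auto
          then show "(indicator {..t} (s ! i) :: real) = 0" using gt by simp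
        qed
      qed (use m in auto)
      also have "\<dots> \<le> (\<Sum>i<m. 1)" by (intro sum_mono) (simp add: indicator_def)
      finally show False using h sum by simp
    qed
  qed
qed

lemma os_mono_sum:
  assumes m: "m < n" and g0: "\<And>t. 0 \<le> g t" and gm: "mono g"
  shows "real (n - m) * g (os n m x) \<le> (\<Sum>i<n. g (x i))"
proof -
  define s where "s = sort (map x [0..<n])"
  have ls: "length s = n" and ss: "sorted s" unfolding s_def by simp_all
  have "real (n - m) * g (os n m x) = (\<Sum>i\<in>{m..<n}. g (s ! m))" unfolding os_def s_def by simp
  also have "\<dots> \<le> (\<Sum>i\<in>{m..<n}. g (s ! i))"
  proof (rule sum_mono)
    fix i assume "i \<in> {m..<n}"
    then have "s ! m \<le> s ! i" using ss ls by (intro sorted_nth_mono) auto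
    then show "g (s ! m) \<le> g (s ! i)" using monoD[OF gm] by blast
  qed
  also have "\<dots> \<le> (\<Sum>i<n. g (s ! i))" using g0 by (intro sum_mono2) auto
  also have "\<dots> = (\<Sum>i<n. g (x i))" unfolding s_def by (rule sum_sort[symmetric])
  finally show ?thesis .
qed

lemma os_antimono_sum:
  assumes m: "m < n" and g0: "\<And>t. 0 \<le> g t" and gm: "antimono g"
  shows "real (Suc m) * g (os n m x) \<le> (\<Sum>i<n. g (x i))"
proof -
  define s where "s = sort (map x [0..<n])"
  have ls: "length s = n" and ss: "sorted s" unfolding s_def by simp_all
  have "real (Suc m) * g (os n m x) = (\<Sum>i\<in>{..m}. g (s ! m))" unfolding os_def s_def by simp
  also have "\<dots> \<le> (\<Sum>i\<in>{..m}. g (s ! i))"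
  proof (rule sum_mono)
    fix i assume "i \<in> {..m}"
    then have "s ! i \<le> s ! m" using ss ls m by (intro sorted_nth_mono) auto
    then show "g (s ! m) \<le> g (s ! i)" using antimonoD[OF gm] by blast
  qed
  also have "\<dots> \<le> (\<Sum>i<n. g (s ! i))" using g0 m by (intro sum_mono2) auto
  also have "\<dots> = (\<Sum>i<n. g (x i))" unfolding s_def by (rule sum_sort[symmetric])
  finally show ?thesis .
qed

context setting begin

lemma os_meas[measurable]: "m < n \<Longrightarrow> os n m \<in> borel_measurable (PP n)"
proof -
  assume m: "m < n"
  have im: "(\<lambda>x. indicator {..t} (x i) :: real) \<in> borel_measurable (PP n)" if "i < n" for i t
  proof -
    have "(indicator {..t} :: real \<Rightarrow> real) \<in> borel_measurable borel" by measurable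
    from measurable_comp[OF comp_meas_borel[OF that] this] show ?thesis by (simp add: comp_def)
  qed
  show ?thesis
  proof (subst borel_measurable_iff_le, intro allI)
    fix t
    have "{w \<in> space (PP n). os n m w \<le> t} = {w \<in> space (PP n). real (Suc m) \<le> (\<Sum>i<n. indicator {..t} (w i))}"
      using os_le_iff[OF m] by auto
    also have "\<dots> \<in> sets (PP n)"
      using im by (intro borel_measurable_le borel_measurable_const borel_measurable_sum) auto
    finally show "{w \<in> space (PP n). os n m w \<le> t} \<in> sets (PP n)" .
  qed
qed

end

locale qlev = setting +
  fixes t :: real
  assumes t0: "0 < t" and t1: "t < 1"
begin

definition Q :: real where "Q = cdf_inv M t"
definition mn :: "nat \<Rightarrow> nat" where "mn n = nat \<lfloor>real (n - 1) * t\<rfloor>"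

lemma mn_bounds:
  assumes n: "n \<ge> 1"
  shows "mn n < n" "real (mn n) \<le> (real n - 1) * t" "(real n - 1) * t < real (mn n) + 1"
proof -
  have r: "real (n - 1) = real n - 1" using n by simp
  have nn: "0 \<le> (real n - 1) * t" using n t0 by simp
  have fl: "real (mn n) = real_of_int \<lfloor>(real n - 1) * t\<rfloor>" unfolding mn_def r using nn by simp
  show "real (mn n) \<le> (real n - 1) * t" unfolding fl by linarith
  show "(real n - 1) * t < real (mn n) + 1" unfolding fl by linarith
  have "(real n - 1) * t \<le> real n - 1" using n t1 nn by (simp add: mult_left_le)
  then have "real (mn n) < real n" using \<open>real (mn n) \<le> (real n - 1) * t\<close> by linarith
  then show "mn n < n" by simp
qed

lemma Q_props: "cdf M Q = t" "\<And>e. e > 0 \<Longrightarrow> cdf M (Q - e) < t" "\<And>e. e > 0 \<Longrightarrow> t < cdf M (Q + e)"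
  unfolding Q_def using quantile[OF t0 t1] by auto

definition Yb :: "nat \<Rightarrow> (nat \<Rightarrow> real) \<Rightarrow> real" where
  "Yb n x = (1 / real n) * (\<Sum>i<n. \<bar>x i - Q\<bar>)"

definition C :: real where "C = 1 / (1 - t) + 2 / t"

lemma C_pos: "0 < C"
proof -
  have "0 < 1 - t" using t1 by simp
  then have a: "0 < 1 / (1 - t)" by simp
  have b: "0 < 2 / t" using t0 by simp
  show ?thesis unfolding C_def using add_pos_pos[OF a b] .
qed

lemma bound_a:
  assumes n: "n \<ge> 2"
  shows "\<bar>os n (mn n) x - Q\<bar> \<le> C * Yb n x"
proof -
  define m where "m = mn n"
  have mb: "m < n" "real m \<le> (real n - 1) * t" "(real n - 1) * t < real m + 1"
    using mn_bounds[of n] n unfolding m_def by auto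
  define S where "S = (\<Sum>i<n. \<bar>x i - Q\<bar>)"
  have S0: "0 \<le> S" unfolding S_def by (simp add: sum_nonneg)
  define ov where "ov = os n m x"
  have np: "0 < real n" using n by simp
  have g1: "real (n - m) * max 0 (ov - Q) \<le> S"
  proof -
    have "real (n - m) * max 0 (ov - Q) \<le> (\<Sum>i<n. max 0 (x i - Q))"
      unfolding ov_def by (rule os_mono_sum[OF mb(1)]) (auto intro!: monoI)
    also have "\<dots> \<le> S" unfolding S_def by (intro sum_mono) auto
    finally show ?thesis .
  qed
  have g2: "real (Suc m) * max 0 (Q - ov) \<le> S"
  proof -
    have "real (Suc m) * max 0 (Q - ov) \<le> (\<Sum>i<n. max 0 (Q - x i))"
      unfolding ov_def by (rule os_antimono_sum[OF mb(1)]) (auto intro!: antimonoI)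
    also have "\<dots> \<le> S" unfolding S_def by (intro sum_mono) auto
    finally show ?thesis .
  qed
  have nm: "real n * (1 - t) \<le> real (n - m)"
  proof -
    have "real (n - m) = real n - real m" using mb(1) by simp
    then show ?thesis using mb(2) t0 by (simp add: algebra_simps)
  qed
  have sm: "real n * t / 2 \<le> real (Suc m)"
  proof -
    have "real n * t / 2 \<le> (real n - 1) * t" using n t0 by (simp add: field_simps)
    then show ?thesis using mb(3) by simp
  qed
  have p1: "max 0 (ov - Q) \<le> S / (real n * (1 - t))"
  proof -
    have "real n * (1 - t) * max 0 (ov - Q) \<le> S"
      using g1 nm by (meson max.cobounded1 mult_right_mono order_trans)
    moreover have d: "0 < real n * (1 - t)" using np t1 by simp
    ultimately show ?thesis using pos_le_divide_eq by (metis mult.commute)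
  qed
  have p2: "max 0 (Q - ov) \<le> S / (real n * t / 2)"
  proof -
    have "real n * t / 2 * max 0 (Q - ov) \<le> S"
      using g2 sm by (meson max.cobounded1 mult_right_mono order_trans)
    moreover have d: "0 < real n * t / 2" using np t0 by simp
    ultimately show ?thesis using pos_le_divide_eq by (metis mult.commute)
  qed
  have "\<bar>ov - Q\<bar> = max 0 (ov - Q) + max 0 (Q - ov)" by (simp add: abs_if max_def)
  also have "\<dots> \<le> S / (real n * (1 - t)) + S / (real n * t / 2)" by (rule add_mono[OF p1 p2])
  also have "\<dots> = C * Yb n x" unfolding C_def Yb_def S_def[symmetric] using np t0 t1 by (simp add: field_simps)
  finally show ?thesis unfolding ov_def m_def .
qed

end

context qlev begin

definition Nc :: "real \<Rightarrow> nat \<Rightarrow> (nat \<Rightarrow> real) \<Rightarrow> real" where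
  "Nc c n x = (1 / real n) * (\<Sum>i<n. indicator {..c} (x i))"

definition Qf :: "real \<Rightarrow> nat \<Rightarrow> (nat \<Rightarrow> real) \<Rightarrow> real" where
  "Qf e n x = 4 * (Nc (Q + e) n x - cdf M (Q + e))\<^sup>2 / (cdf M (Q + e) - t)\<^sup>2
            + 4 * (Nc (Q - e) n x - cdf M (Q - e))\<^sup>2 / (t - cdf M (Q - e))\<^sup>2"

definition hK :: "real \<Rightarrow> real \<Rightarrow> real" where
  "hK K u = \<bar>u - Q\<bar> * indicator {u. K < \<bar>u - Q\<bar>} u"

definition TK :: "real \<Rightarrow> nat \<Rightarrow> (nat \<Rightarrow> real) \<Rightarrow> real" where
  "TK K n x = (1 / real n) * (\<Sum>i<n. hK K (x i))"

lemma Qf_nonneg: "0 \<le> Qf e n x"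
  unfolding Qf_def by simp

lemma hK_nonneg: "0 \<le> hK K u" unfolding hK_def by simp

lemma TK_nonneg: "0 \<le> TK K n x" unfolding TK_def using hK_nonneg by (simp add: sum_nonneg)

lemma one_le_frac:
  fixes z d :: real
  assumes d: "0 < d" and z: "d / 2 < z"
  shows "1 \<le> 4 * z\<^sup>2 / d\<^sup>2"
proof -
  have "(d / 2)\<^sup>2 \<le> z\<^sup>2" using d z by (intro power_mono) auto
  then have "d\<^sup>2 \<le> 4 * z\<^sup>2" by (simp add: power_divide)
  then show ?thesis using d by (simp add: le_divide_eq)
qed

lemma bound_c:
  assumes e: "e > 0" and n: "n \<ge> 1"
    and n1: "2 * (1 - t) / (cdf M (Q + e) - t) \<le> real n"
    and n2: "2 * t / (t - cdf M (Q - e)) \<le> real n"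
    and far: "e < \<bar>os n (mn n) x - Q\<bar>"
  shows "1 \<le> Qf e n x"
proof -
  define a where "a = cdf M (Q + e)"
  define b where "b = cdf M (Q - e)"
  have ta: "t < a" "b < t" unfolding a_def b_def using Q_props e by auto
  define m where "m = mn n"
  have mb: "m < n" "real m \<le> (real n - 1) * t" "(real n - 1) * t < real m + 1"
    using mn_bounds[OF n] unfolding m_def by auto
  have np: "0 < real n" using n by simp
  have sq1: "0 \<le> 4 * (Nc (Q + e) n x - a)\<^sup>2 / (a - t)\<^sup>2" "0 \<le> 4 * (Nc (Q - e) n x - b)\<^sup>2 / (t - b)\<^sup>2"
    by simp_all
  show ?thesis
  proof (cases "os n m x > Q + e")
    case True
    then have "\<not> real (Suc m) \<le> (\<Sum>i<n. indicator {..Q + e} (x i))"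
      using os_le_iff[OF mb(1), of x "Q + e"] by simp
    then have S: "(\<Sum>i<n. indicator {..Q + e} (x i)) < real m + 1" by simp
    have "Nc (Q + e) n x < (real m + 1) / real n"
      unfolding Nc_def using S np by (simp add: divide_strict_right_mono)
    also have "(real m + 1) / real n \<le> t + (1 - t) / real n"
    proof -
      have "real m + 1 \<le> real n * t + (1 - t)" using mb(2) by (simp add: algebra_simps)
      then have "(real m + 1) / real n \<le> (real n * t + (1 - t)) / real n" using np by (simp add: divide_right_mono)
      also have "\<dots> = t + (1 - t) / real n" using np by (simp add: field_simps)
      finally show ?thesis .
    qed
    also have "(1 - t) / real n \<le> (a - t) / 2"
    proof -
      have "2 * (1 - t) / (a - t) \<le> real n" using n1 unfolding a_def .
      then have "2 * (1 - t) \<le> real n * (a - t)" using ta by (simp add: pos_divide_le_eq)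
      then show ?thesis using np by (simp add: divide_simps mult.commute)
    qed
    finally have h: "Nc (Q + e) n x < t + (a - t) / 2" by simp
    define d where "d = (a - t) / 2"
    have "t + d = a - d" unfolding d_def by (simp add: field_simps)
    then have "(a - t) / 2 < a - Nc (Q + e) n x" using h unfolding d_def[symmetric] by linarith
    then have "1 \<le> 4 * (a - Nc (Q + e) n x)\<^sup>2 / (a - t)\<^sup>2" using ta by (intro one_le_frac) auto
    then have "1 \<le> 4 * (Nc (Q + e) n x - a)\<^sup>2 / (a - t)\<^sup>2" by (simp add: power2_commute)
    then show ?thesis unfolding Qf_def a_def[symmetric] b_def[symmetric] using sq1(2) by linarith
  next
    case False
    then have lt: "os n m x < Q - e" using far unfolding m_def by (auto simp: abs_if split: if_splits)
    then have "real (Suc m) \<le> (\<Sum>i<n. indicator {..Q - e} (x i))"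
      using os_le_iff[OF mb(1), of x "Q - e"] by simp
    then have "(real n - 1) * t / real n < Nc (Q - e) n x"
      unfolding Nc_def using mb(3) np by (simp add: divide_strict_right_mono)
    moreover have "(real n - 1) * t / real n = t - t / real n" using np by (simp add: field_simps)
    moreover have "t / real n \<le> (t - b) / 2"
    proof -
      have "2 * t / (t - b) \<le> real n" using n2 unfolding b_def .
      then have "2 * t \<le> real n * (t - b)" using ta by (simp add: pos_divide_le_eq)
      then show ?thesis using np by (simp add: divide_simps mult.commute)
    qed
    ultimately have h: "t - (t - b) / 2 < Nc (Q - e) n x" by linarith
    define d where "d = (t - b) / 2"
    have "t - d = b + d" unfolding d_def by (simp add: field_simps)
    then have "(t - b) / 2 < Nc (Q - e) n x - b" using h unfolding d_def[symmetric] by linarith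
    then have "1 \<le> 4 * (Nc (Q - e) n x - b)\<^sup>2 / (t - b)\<^sup>2" using ta by (intro one_le_frac) auto
    then show ?thesis unfolding Qf_def a_def[symmetric] b_def[symmetric] using sq1(1) by linarith
  qed
qed

lemma Yb_le: "n \<ge> 1 \<Longrightarrow> K \<ge> 0 \<Longrightarrow> Yb n x \<le> K + TK K n x"
proof -
  assume n: "n \<ge> 1" and K: "K \<ge> 0"
  have "\<bar>u - Q\<bar> \<le> K + hK K u" for u unfolding hK_def using K by (auto simp: indicator_def)
  then have "(\<Sum>i<n. \<bar>x i - Q\<bar>) \<le> (\<Sum>i<n. K + hK K (x i))" by (intro sum_mono) auto
  then have "(1 / real n) * (\<Sum>i<n. \<bar>x i - Q\<bar>) \<le> (1 / real n) * (\<Sum>i<n. K + hK K (x i))"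
    by (intro mult_left_mono) auto
  also have "\<dots> = K + TK K n x" unfolding TK_def using n by (simp add: sum.distrib field_simps)
  finally show ?thesis unfolding Yb_def .
qed

lemma bound_total:
  assumes e: "e > 0" and n: "n \<ge> 2" and K: "K \<ge> 0"
    and n1: "2 * (1 - t) / (cdf M (Q + e) - t) \<le> real n"
    and n2: "2 * t / (t - cdf M (Q - e)) \<le> real n"
  shows "\<bar>os n (mn n) x - Q\<bar> \<le> e + C * (K * Qf e n x + TK K n x)"
proof (cases "e < \<bar>os n (mn n) x - Q\<bar>")
  case True
  have q1: "1 \<le> Qf e n x" using bound_c[OF e _ n1 n2 True] n by simp
  have "\<bar>os n (mn n) x - Q\<bar> \<le> C * Yb n x" by (rule bound_a[OF n])
  also have "\<dots> \<le> C * (K + TK K n x)" using Yb_le[of n K x] n K C_pos by (intro mult_left_mono) auto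
  also have "\<dots> \<le> C * (K * Qf e n x + TK K n x)"
    using q1 K C_pos by (intro mult_left_mono) (auto simp: mult_le_cancel_left1)
  finally show ?thesis using e by simp
next
  case False
  have "0 \<le> C * (K * Qf e n x + TK K n x)"
    using C_pos K Qf_nonneg TK_nonneg by (intro mult_nonneg_nonneg add_nonneg_nonneg) auto
  then show ?thesis using False by simp
qed

end

context qlev begin

lemma integrable_os:
  assumes m: "m < n"
  shows "integrable (PP n) (\<lambda>x. \<bar>os n m x - Q\<bar>)"
proof -
  interpret P: prob_space "PP n" by (rule prob_PP)
  show ?thesis
proof (rule Bochner_Integration.integrable_bound)
  show "integrable (PP n) (\<lambda>x. (\<Sum>i<n. \<bar>x i\<bar>) + \<bar>Q\<bar>)"
    using integrable_comp[OF intabs] by (intro Bochner_Integration.integrable_add integrable_sum) auto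
  show "(\<lambda>x. \<bar>os n m x - Q\<bar>) \<in> borel_measurable (PP n)" using os_meas[OF m] by measurable
  show "AE x in PP n. norm \<bar>os n m x - Q\<bar> \<le> norm ((\<Sum>i<n. \<bar>x i\<bar>) + \<bar>Q\<bar>)"
  proof (intro AE_I2)
    fix x
    have "\<bar>os n m x\<bar> \<le> (\<Sum>i<n. \<bar>x i\<bar>)" by (rule os_abs[OF m])
    moreover have "0 \<le> (\<Sum>i<n. \<bar>x i\<bar>)" by (simp add: sum_nonneg)
    ultimately show "norm \<bar>os n m x - Q\<bar> \<le> norm ((\<Sum>i<n. \<bar>x i\<bar>) + \<bar>Q\<bar>)" by simp
  qed
qed
qed

lemma Nc_bd: "0 \<le> Nc c n x \<and> Nc c n x \<le> 1"
proof (cases "n = 0")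
  case True then show ?thesis by (simp add: Nc_def)
next
  case False
  have "(\<Sum>i<n. indicator {..c} (x i) :: real) \<le> (\<Sum>i<n. 1)" by (intro sum_mono) (simp add: indicator_def)
  then have "(\<Sum>i<n. indicator {..c} (x i) :: real) \<le> real n" by simp
  then show ?thesis using False unfolding Nc_def by (auto simp: sum_nonneg divide_le_eq)
qed

lemma Nc_meas[measurable]: "Nc c n \<in> borel_measurable (PP n)"
proof -
  have "(\<lambda>x. indicator {..c} (x i) :: real) \<in> borel_measurable (PP n)" if "i < n" for i
  proof -
    have "(indicator {..c} :: real \<Rightarrow> real) \<in> borel_measurable borel" by measurable
    from measurable_comp[OF comp_meas_borel[OF that] this] show ?thesis by (simp add: comp_def)
  qed
  then show ?thesis unfolding Nc_def
    by (intro borel_measurable_times borel_measurable_const borel_measurable_sum) auto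
qed

lemma E_sqdev:
  assumes n: "n \<ge> 1"
  shows "integrable (PP n) (\<lambda>x. (Nc c n x - cdf M c)\<^sup>2)"
    and "(\<integral>x. (Nc c n x - cdf M c)\<^sup>2 \<partial>PP n) \<le> 1 / real n"
proof -
  interpret P: prob_space "PP n" by (rule prob_PP)
  show int2: "integrable (PP n) (\<lambda>x. (Nc c n x - cdf M c)\<^sup>2)"
  proof (rule P.integrable_const_bound[where B=1])
    show "AE x in PP n. norm ((Nc c n x - cdf M c)\<^sup>2) \<le> 1"
    proof (intro AE_I2)
      fix x
      have "0 \<le> cdf M c" "cdf M c \<le> 1" unfolding Defs.cdf_def using probU by (auto simp: measure_le_1)
      then have "\<bar>Nc c n x - cdf M c\<bar> \<le> 1" using Nc_bd[of c n x] by (auto simp: abs_le_iff)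
      then have "\<bar>Nc c n x - cdf M c\<bar>\<^sup>2 \<le> 1\<^sup>2" by (intro power_mono) auto
      then show "norm ((Nc c n x - cdf M c)\<^sup>2) \<le> 1" by simp
    qed
  qed measurable
  define g where "g u = indicator {..c} u - cdf M c" for u :: real
  have gm: "g \<in> borel_measurable borel" unfolding g_def by measurable
  have gb: "\<bar>g u\<bar> \<le> 1" for u
  proof -
    have "0 \<le> cdf M c" "cdf M c \<le> 1" unfolding Defs.cdf_def using probU by (auto simp: measure_le_1)
    then show ?thesis unfolding g_def by (auto simp: indicator_def)
  qed
  have g0: "(\<integral>u. g u \<partial>M) = 0"
  proof -
    have "integrable M (indicator {..c} :: real \<Rightarrow> real)"
      by (rule integrable_real_indicator) (auto simp: sM emeasure_eq_measure)
    then show ?thesis unfolding g_def using probU by (simp add: Defs.cdf_def)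
  qed
  have zg: "Nc c n x - cdf M c = (1 / real n) * (\<Sum>i<n. g (x i))" for x
    unfolding g_def Nc_def using n by (simp add: sum_subtractf right_diff_distrib)
  show "(\<integral>x. (Nc c n x - cdf M c)\<^sup>2 \<partial>PP n) \<le> 1 / real n"
    unfolding zg using n by (intro variance_bound[OF gm gb g0]) auto
qed

lemma E_Qf:
  assumes n: "n \<ge> 1" and e: "e > 0"
  shows "integrable (PP n) (Qf e n)"
    and "(\<integral>x. Qf e n x \<partial>PP n) \<le> 4 / (cdf M (Q + e) - t)\<^sup>2 * (1 / real n) + 4 / (t - cdf M (Q - e))\<^sup>2 * (1 / real n)"
proof -
  define a where "a = cdf M (Q + e)"
  define b where "b = cdf M (Q - e)"
  have ta: "t < a" "b < t" unfolding a_def b_def using Q_props e by auto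
  have eq: "Qf e n x = 4 / (a - t)\<^sup>2 * (Nc (Q + e) n x - a)\<^sup>2 + 4 / (t - b)\<^sup>2 * (Nc (Q - e) n x - b)\<^sup>2" for x
    unfolding Qf_def a_def b_def by simp
  note i1 = E_sqdev[OF n, of "Q + e"] and i2 = E_sqdev[OF n, of "Q - e"]
  show "integrable (PP n) (Qf e n)"
    unfolding eq[abs_def] a_def b_def using i1(1) i2(1) by simp
  have "(\<integral>x. Qf e n x \<partial>PP n) = 4 / (a - t)\<^sup>2 * (\<integral>x. (Nc (Q + e) n x - a)\<^sup>2 \<partial>PP n) + 4 / (t - b)\<^sup>2 * (\<integral>x. (Nc (Q - e) n x - b)\<^sup>2 \<partial>PP n)"
    unfolding eq a_def b_def using i1(1) i2(1) by simp
  also have "\<dots> \<le> 4 / (a - t)\<^sup>2 * (1 / real n) + 4 / (t - b)\<^sup>2 * (1 / real n)"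
    using i1(2) i2(2) unfolding a_def[symmetric] b_def[symmetric]
    by (intro add_mono mult_left_mono) auto
  finally show "(\<integral>x. Qf e n x \<partial>PP n) \<le> 4 / (cdf M (Q + e) - t)\<^sup>2 * (1 / real n) + 4 / (t - cdf M (Q - e))\<^sup>2 * (1 / real n)"
    unfolding a_def b_def .
qed

lemma hK_meas[measurable]: "hK K \<in> borel_measurable borel"
proof -
  have "{u. K < \<bar>u - Q\<bar>} \<in> sets borel" by measurable
  then show ?thesis unfolding hK_def[abs_def] by measurable
qed

lemma integrable_hK: "integrable M (hK K)"
proof (rule Bochner_Integration.integrable_bound)
  show "integrable M (\<lambda>u. \<bar>u\<bar> + \<bar>Q\<bar>)" using intabs by simp
  show "hK K \<in> borel_measurable M" by (simp add: measurable_cong_sets[OF sM refl])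
  show "AE u in M. norm (hK K u) \<le> norm (\<bar>u\<bar> + \<bar>Q\<bar>)"
    by (intro AE_I2) (auto simp: hK_def indicator_def)
qed

lemma E_TK: "n \<ge> 1 \<Longrightarrow> integrable (PP n) (TK K n) \<and> (\<integral>x. TK K n x \<partial>PP n) = (\<integral>u. hK K u \<partial>M)"
  unfolding TK_def[abs_def] using integrable_mean[OF integrable_hK] integral_mean[OF integrable_hK] by auto

lemma tail_hK:
  assumes e: "e > 0"
  shows "\<exists>K\<ge>0. (\<integral>u. hK K u \<partial>M) < e"
proof -
  define s where "s N u = hK (real N) u" for N :: nat and u
  have lim: "(\<lambda>N. \<integral>u. s N u \<partial>M) \<longlonglongrightarrow> (\<integral>u. 0 \<partial>M)"
  proof (rule integral_dominated_convergence[where w="\<lambda>u. \<bar>u\<bar> + \<bar>Q\<bar>"])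
    show "(\<lambda>u. 0::real) \<in> borel_measurable M" by simp
    show "\<And>i. s i \<in> borel_measurable M" unfolding s_def by (simp add: measurable_cong_sets[OF sM refl])
    show "integrable M (\<lambda>u. \<bar>u\<bar> + \<bar>Q\<bar>)" using intabs by simp
    show "AE u in M. (\<lambda>i. s i u) \<longlonglongrightarrow> 0"
    proof (intro AE_I2 tendsto_eventually)
      fix u :: real
      show "eventually (\<lambda>N. s N u = 0) sequentially"
        unfolding eventually_sequentially
      proof (intro exI allI impI)
        fix N assume "nat \<lceil>\<bar>u - Q\<bar>\<rceil> \<le> N"
        then have "\<bar>u - Q\<bar> \<le> real N" by linarith
        then show "s N u = 0" unfolding s_def hK_def by (simp add: indicator_def)
      qed
    qed
    show "\<And>i. AE u in M. norm (s i u) \<le> \<bar>u\<bar> + \<bar>Q\<bar>"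
      unfolding s_def by (intro AE_I2) (auto simp: hK_def indicator_def)
  qed
  then have "eventually (\<lambda>N. (\<integral>u. s N u \<partial>M) < e) sequentially"
    using e by (intro order_tendstoD(2)) auto
  then obtain N0 where "(\<integral>u. s N0 u \<partial>M) < e" unfolding eventually_sequentially by blast
  then show ?thesis unfolding s_def by (intro exI[of _ "real N0"]) auto
qed

end

context qlev begin

lemma os_conv: "(\<lambda>n. \<integral>x. \<bar>os n (mn n) x - Q\<bar> \<partial>PP n) \<longlonglongrightarrow> 0"
proof (rule order_tendstoI)
  fix a :: real assume "a < 0"
  then show "eventually (\<lambda>n. a < (\<integral>x. \<bar>os n (mn n) x - Q\<bar> \<partial>PP n)) sequentially"
  proof (intro always_eventually allI)
    fix n
    have "0 \<le> (\<integral>x. \<bar>os n (mn n) x - Q\<bar> \<partial>PP n)" by simp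
    then show "a < (\<integral>x. \<bar>os n (mn n) x - Q\<bar> \<partial>PP n)" using \<open>a < 0\<close> by linarith
  qed
next
  fix a :: real assume a: "0 < a"
  define e where "e = a / 4"
  have e: "e > 0" unfolding e_def using a by simp
  define a1 where "a1 = cdf M (Q + e)"
  define b1 where "b1 = cdf M (Q - e)"
  have ta: "t < a1" "b1 < t" unfolding a1_def b1_def using Q_props e by auto
  obtain K where K: "K \<ge> 0" "(\<integral>u. hK K u \<partial>M) < e / C"
    using tail_hK[of "e / C"] e C_pos by auto
  define A0 where "A0 = 4 / (a1 - t)\<^sup>2 + 4 / (t - b1)\<^sup>2"
  have A0: "0 \<le> A0" unfolding A0_def by simp
  define N where "N = nat \<lceil>max (max 2 (2 * (1 - t) / (a1 - t))) (max (2 * t / (t - b1)) (C * K * A0 / e))\<rceil>"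
  show "eventually (\<lambda>n. (\<integral>x. \<bar>os n (mn n) x - Q\<bar> \<partial>PP n) < a) sequentially"
    unfolding eventually_sequentially
  proof (intro exI allI impI)
    fix n assume nN: "N \<le> n"
    have nr: "max (max 2 (2 * (1 - t) / (a1 - t))) (max (2 * t / (t - b1)) (C * K * A0 / e)) \<le> real n"
      using nN unfolding N_def by linarith
    then have n2r: "2 \<le> real n" and n1: "2 * (1 - t) / (a1 - t) \<le> real n"
      and n2: "2 * t / (t - b1) \<le> real n" and n3: "C * K * A0 / e \<le> real n" by auto
    have n: "n \<ge> 2" using n2r by simp
    have np: "0 < real n" using n by simp
    note EQ = E_Qf[of n e] and ET = E_TK[of n K]
    have intQ: "integrable (PP n) (Qf e n)" using EQ n e by auto
    have intT: "integrable (PP n) (TK K n)" using ET n by auto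
    interpret P: prob_space "PP n" by (rule prob_PP)
    have "(\<integral>x. \<bar>os n (mn n) x - Q\<bar> \<partial>PP n) \<le> (\<integral>x. e + C * (K * Qf e n x + TK K n x) \<partial>PP n)"
    proof (rule integral_mono)
      show "integrable (PP n) (\<lambda>x. \<bar>os n (mn n) x - Q\<bar>)" using mn_bounds[of n] n by (intro integrable_os) auto
      show "integrable (PP n) (\<lambda>x. e + C * (K * Qf e n x + TK K n x))" using intQ intT by simp
      fix x show "\<bar>os n (mn n) x - Q\<bar> \<le> e + C * (K * Qf e n x + TK K n x)"
        using bound_total[OF e n K(1)] n1 n2 unfolding a1_def b1_def by simp
    qed
    also have "\<dots> = e + C * (K * (\<integral>x. Qf e n x \<partial>PP n) + (\<integral>x. TK K n x \<partial>PP n))"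
      using intQ intT P.prob_space by simp
    also have "\<dots> \<le> e + C * (K * (A0 * (1 / real n)) + e / C)"
    proof -
      have "(\<integral>x. Qf e n x \<partial>PP n) \<le> A0 * (1 / real n)" using EQ n e unfolding A0_def a1_def b1_def by (simp add: algebra_simps)
      moreover have "(\<integral>x. TK K n x \<partial>PP n) \<le> e / C" using ET n K by simp
      ultimately show ?thesis using K(1) C_pos by (intro add_left_mono mult_left_mono add_mono) auto
    qed
    also have "\<dots> = e + C * K * A0 / real n + e" using C_pos by (simp add: field_simps)
    also have "C * K * A0 / real n \<le> e"
    proof -
      have "C * K * A0 \<le> e * real n" using n3 e by (simp add: pos_divide_le_eq mult.commute)
      then show ?thesis using np by (simp add: divide_le_eq mult.commute)
    qed
    then have "e + C * K * A0 / real n + e \<le> 3 * e" by simp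
    finally show "(\<integral>x. \<bar>os n (mn n) x - Q\<bar> \<partial>PP n) < a" unfolding e_def using a by simp
  qed
qed

end

context pct begin

definition mj :: "nat \<Rightarrow> nat \<Rightarrow> nat" where "mj n j = nat \<lfloor>real (n - 1) * v j\<rfloor>"

lemma qlev_j: "j < k \<Longrightarrow> qlev M \<rho> I k (v j)"
  using setting_axioms v01 by (simp add: qlev_def qlev_axioms_def)

lemma mj_lt: "j < k \<Longrightarrow> n \<ge> 1 \<Longrightarrow> mj n j < n"
proof -
  assume j: "j < k" and n: "n \<ge> 1"
  interpret Qj: qlev M \<rho> I k "v j" by (rule qlev_j[OF j])
  have eq: "mj n j = Qj.mn n" unfolding mj_def Qj.mn_def ..
  show ?thesis unfolding eq by (rule Qj.mn_bounds(1)[OF n])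
qed

lemma PM_os: "PM n k v x j = os n (mj n j) x"
  unfolding PM_def os_def mj_def ..

lemma SC_PM_eq: "SC_PM n k v x = SC n k x (\<lambda>j. os n (mj n j) x)"
  unfolding SC_PM_def PM_os[abs_def] ..

definition Dq :: "nat \<Rightarrow> (nat \<Rightarrow> real) \<Rightarrow> real" where
  "Dq n x = (\<Sum>j<k. \<bar>os n (mj n j) x - q j\<bar>)"

lemma SC_PM_close: "\<bar>SC_PM n k v x - SC n k x q\<bar> \<le> Dq n x"
proof -
  have d: "\<bar>os n (mj n j) x - q j\<bar> \<le> Dq n x" if "j < k" for j
    unfolding Dq_def using that by (intro member_le_sum[where f="\<lambda>j. \<bar>os n (mj n j) x - q j\<bar>"]) auto
  have "SC n k x (\<lambda>j. os n (mj n j) x) \<le> SC n k x q + Dq n x"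
    using d by (intro SC_lip_p) auto
  moreover have "SC n k x q \<le> SC n k x (\<lambda>j. os n (mj n j) x) + Dq n x"
    using d by (intro SC_lip_p) (auto simp: abs_minus_commute)
  ultimately show ?thesis unfolding SC_PM_eq by linarith
qed

lemma SC_PM_meas: "n \<ge> 1 \<Longrightarrow> (\<lambda>x. SC_PM n k v x) \<in> borel_measurable (PP n)"
proof -
  assume n: "n \<ge> 1"
  have om: "(\<lambda>x. os n (mj n j) x) \<in> borel_measurable (PP n)" if "j < k" for j
    using os_meas[OF mj_lt[OF that n]] by simp
  have cm: "(\<lambda>x. cmin k (\<lambda>j. os n (mj n j) x) (x i)) \<in> borel_measurable (PP n)" if "i < n" for i
    unfolding cmin_def using om comp_meas_borel[OF that]
    by (intro borel_measurable_Min borel_measurable_abs borel_measurable_diff) auto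
  show ?thesis unfolding SC_PM_eq SC_cmin using cm
    by (intro borel_measurable_times borel_measurable_const borel_measurable_sum) auto
qed

lemma Dq_int: "n \<ge> 1 \<Longrightarrow> integrable (PP n) (Dq n)"
proof -
  assume n: "n \<ge> 1"
  have "integrable (PP n) (\<lambda>x. \<bar>os n (mj n j) x - q j\<bar>)" if "j < k" for j
  proof -
    interpret Qj: qlev M \<rho> I k "v j" by (rule qlev_j[OF that])
    show ?thesis using Qj.integrable_os[OF mj_lt[OF that n]] unfolding Qj.Q_def q_def by simp
  qed
  then show ?thesis unfolding Dq_def[abs_def]
    by (intro Bochner_Integration.integrable_sum) auto
qed

lemma SC_PM_int: "n \<ge> 1 \<Longrightarrow> integrable (PP n) (\<lambda>x. SC_PM n k v x)"
proof -
  assume n: "n \<ge> 1"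
  show ?thesis
  proof (rule Bochner_Integration.integrable_bound)
    show "integrable (PP n) (\<lambda>x. SC n k x q + Dq n x)"
      using integrable_SC[of n q] Dq_int[OF n] by simp
    show "(\<lambda>x. SC_PM n k v x) \<in> borel_measurable (PP n)" by (rule SC_PM_meas[OF n])
    show "AE x in PP n. norm (SC_PM n k v x) \<le> norm (SC n k x q + Dq n x)"
    proof (intro AE_I2)
      fix x
      have "0 \<le> SC_PM n k v x" unfolding SC_PM_def by (rule SC_nonneg)
      moreover have "0 \<le> SC n k x q" by (rule SC_nonneg)
      ultimately show "norm (SC_PM n k v x) \<le> norm (SC n k x q + Dq n x)"
        using SC_PM_close[of n x] by (simp add: abs_le_iff)
    qed
  qed
qed

lemma E_Dq_lim: "(\<lambda>n. \<integral>x. Dq n x \<partial>PP n) \<longlonglongrightarrow> 0"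
proof -
  have lim: "(\<lambda>n. \<Sum>j<k. \<integral>x. \<bar>os n (mj n j) x - q j\<bar> \<partial>PP n) \<longlonglongrightarrow> (\<Sum>j<k. 0)"
  proof (rule tendsto_sum)
    fix j assume "j \<in> {..<k}"
    then have j: "j < k" by simp
    interpret Qj: qlev M \<rho> I k "v j" by (rule qlev_j[OF j])
    show "(\<lambda>n. \<integral>x. \<bar>os n (mj n j) x - q j\<bar> \<partial>PP n) \<longlonglongrightarrow> 0"
      using Qj.os_conv unfolding Qj.Q_def Qj.mn_def mj_def q_def .
  qed
  have ev: "eventually (\<lambda>n. (\<Sum>j<k. \<integral>x. \<bar>os n (mj n j) x - q j\<bar> \<partial>PP n) = (\<integral>x. Dq n x \<partial>PP n)) sequentially"
    unfolding eventually_sequentially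
  proof (intro exI[of _ 1] allI impI)
    fix n :: nat assume n: "1 \<le> n"
    have "integrable (PP n) (\<lambda>x. \<bar>os n (mj n j) x - q j\<bar>)" if "j < k" for j
    proof -
      interpret Qj: qlev M \<rho> I k "v j" by (rule qlev_j[OF that])
      show ?thesis using Qj.integrable_os[OF mj_lt[OF that n]] unfolding Qj.Q_def q_def by simp
    qed
    then show "(\<Sum>j<k. \<integral>x. \<bar>os n (mj n j) x - q j\<bar> \<partial>PP n) = (\<integral>x. Dq n x \<partial>PP n)"
      unfolding Dq_def
      by (intro Bochner_Integration.integral_sum[where I="{..<k}" and M="PP n" and f="\<lambda>j x. \<bar>os n (mj n j) x - q j\<bar>", symmetric]) auto
  qed
  show ?thesis using Lim_transform_eventually[OF lim ev] by simp
qed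

lemma E_SC_PM_lim: "(\<lambda>n. \<integral>x. SC_PM n k v x \<partial>PP n) \<longlonglongrightarrow> cost q"
proof -
  define S where "S n = (\<integral>x. Dq n x \<partial>PP n)" for n
  have S0: "S \<longlonglongrightarrow> 0" unfolding S_def by (rule E_Dq_lim)
  have close: "\<bar>(\<integral>x. SC_PM n k v x \<partial>PP n) - cost q\<bar> \<le> S n" if n: "n \<ge> 1" for n
  proof -
    have "(\<integral>x. SC_PM n k v x \<partial>PP n) - cost q = (\<integral>x. SC_PM n k v x - SC n k x q \<partial>PP n)"
      using SC_PM_int[OF n] integrable_SC[of n q] E_SC[of n q] n by simp
    also have "\<bar>\<dots>\<bar> \<le> (\<integral>x. \<bar>SC_PM n k v x - SC n k x q\<bar> \<partial>PP n)" by (rule integral_abs_bound)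
    also have "\<dots> \<le> S n" unfolding S_def
      using SC_PM_int[OF n] integrable_SC[of n q] Dq_int[OF n] SC_PM_close
      by (intro integral_mono) auto
    finally show ?thesis .
  qed
  show ?thesis
  proof (rule tendsto_sandwich[of "\<lambda>n. cost q - S n" _ _ "\<lambda>n. cost q + S n"])
    show "eventually (\<lambda>n. cost q - S n \<le> (\<integral>x. SC_PM n k v x \<partial>PP n)) sequentially"
      unfolding eventually_sequentially using close by (intro exI[of _ 1]) (force simp: abs_le_iff)
    show "eventually (\<lambda>n. (\<integral>x. SC_PM n k v x \<partial>PP n) \<le> cost q + S n) sequentially"
      unfolding eventually_sequentially using close by (intro exI[of _ 1]) (force simp: abs_le_iff)
    show "(\<lambda>n. cost q - S n) \<longlonglongrightarrow> cost q" using tendsto_diff[OF tendsto_const S0] by simp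
    show "(\<lambda>n. cost q + S n) \<longlonglongrightarrow> cost q" using tendsto_add[OF tendsto_const S0] by simp
  qed
qed

end

theorem theorem3:
  fixes M :: "real measure" and \<rho> :: "real \<Rightarrow> real" and I :: "real set"
    and k :: nat and v :: "nat \<Rightarrow> real"
  assumes "standing_assumptions M \<rho> I"
    and "integrable M (\<lambda>x. \<bar>x\<bar>)"
    and "k \<ge> 1"
    and "percentile_vector k v"
    and "\<forall>j<k. 0 < v j \<and> v j < 1"
  shows "(\<exists>\<nu>\<in>Pk k. \<forall>lam\<in>Pk k. W1 M \<nu> \<le> W1 M lam) \<and>
         (\<forall>\<nu>k \<in> Pk k. (\<forall>lam\<in>Pk k. W1 M \<nu>k \<le> W1 M lam) \<longrightarrow>
            (\<lambda>n. (\<integral>x. SC_PM n k v x \<partial>(PiM {..<n} (\<lambda>_. M))) /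
                 (\<integral>x. SC_opt n k x \<partial>(PiM {..<n} (\<lambda>_. M))))
            \<longlonglongrightarrow> enn2real (W1 M (nu_Q M I k v)) / enn2real (W1 M \<nu>k))"
proof -
  interpret pct M \<rho> I k v
    using assms by (simp add: pct_def pct_axioms_def setting_def)
  show ?thesis
  proof (intro conjI ballI impI)
    show "\<exists>\<nu>\<in>Pk k. \<forall>lam\<in>Pk k. W1 M \<nu> \<le> W1 M lam" by (rule exists_W1_min)
    fix \<nu>k assume nk: "\<nu>k \<in> Pk k" and mini: "\<forall>lam\<in>Pk k. W1 M \<nu>k \<le> W1 M lam"
    have w1: "enn2real (W1 M \<nu>k) = OPT" using W1_min_val[OF nk mini] OPT_nonneg by simp
    have w2: "enn2real (W1 M (nu_Q M I k v)) = cost q" using W1_nuQ cost_nonneg by simp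
    show "(\<lambda>n. (\<integral>x. SC_PM n k v x \<partial>(PiM {..<n} (\<lambda>_. M))) /
                 (\<integral>x. SC_opt n k x \<partial>(PiM {..<n} (\<lambda>_. M))))
            \<longlonglongrightarrow> enn2real (W1 M (nu_Q M I k v)) / enn2real (W1 M \<nu>k)"
      unfolding w1 w2
    proof (cases "OPT = 0")
      case False
      then show "(\<lambda>n. (\<integral>x. SC_PM n k v x \<partial>PP n) / (\<integral>x. SC_opt n k x \<partial>PP n)) \<longlonglongrightarrow> cost q / OPT"
        by (intro tendsto_divide E_SC_PM_lim E_SC_opt_lim)
    next
      case True
      have "(\<integral>x. SC_opt n k x \<partial>PP n) = 0" for n
        using E_SC_opt_upper[of n] E_SC_opt_nonneg[of n] True by simp
      then show "(\<lambda>n. (\<integral>x. SC_PM n k v x \<partial>PP n) / (\<integral>x. SC_opt n k x \<partial>PP n)) \<longlonglongrightarrow> cost q / OPT"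
        using True by simp
    qed
  qed
qed

end
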